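(* Let $\mathcal{H}$ be a real Hilbert space, let $A_1, A_2:\mathcal{H}\to 2^{\mathcal{H}}$ be maximally monotone, let $B:\mathcal{H}\to\mathcal{H}$ be monotone and $L$-Lipschitz continuous ($L>0$), let $C:\mathcal{H}\to\mathcal{H}$ be $\beta$-cocoercive ($\beta>0$), and assume that $\mathrm{zer}(A_1+A_2+B+C)\neq\emptyset$. Let $\gamma\in\left(0,\frac{\beta}{2(1+4\beta L)}\right)$. Let $z_0,y_0,y_{-1}\in\mathcal{H}$ and define for $n\ge0$ $$x_{n+1}=J_{\gamma A_1}z_n,\qquad y_{n+1}=J_{\gamma A_2}\big(2x_{n+1}-z_n-2\gamma By_n+\gamma By_{n-1}-\gamma Cy_n\big),\qquad z_{n+1}=z_n+y_{n+1}-x_{n+1}.$$ Then: (i) $\{z_n\}$ converges weakly to a point $\bar z\in\mathcal{H}$; (ii) $\{x_n\}$ and $\{y_n\}$ converge weakly to a point $\bar x\in\mathcal{H}$; (iii) $\bar x=J_{\gamma A_1}(\bar z)\in\mathrm{zer}(A_1+A_2+B+C)$.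
   Context: $J_{\gamma A}=(\mathrm{Id}+\gamma A)^{-1}$ denotes the resolvent of a maximally monotone operator $A$. $\mathrm{zer}(T)=\{x: 0\in Tx\}$. $C$ is $\beta$-cocoercive if $\langle x-y,Cx-Cy\rangle\ge\beta\|Cx-Cy\|^2$ for all $x,y\in\mathcal{H}$. *)

theory Defs
  imports "HOL-Analysis.Analysis"
begin

definition monotone_op :: "('a::real_inner \<Rightarrow> 'a set) \<Rightarrow> bool" where
  "monotone_op A \<longleftrightarrow>
     (\<forall>x y u v. u \<in> A x \<longrightarrow> v \<in> A y \<longrightarrow> inner (x - y) (u - v) \<ge> 0)"

definition maximal_monotone :: "('a::real_inner \<Rightarrow> 'a set) \<Rightarrow> bool" where
  "maximal_monotone A \<longleftrightarrow> monotone_op A \<and>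
     (\<forall>x u. (\<forall>y v. v \<in> A y \<longrightarrow> inner (x - y) (u - v) \<ge> 0) \<longrightarrow> u \<in> A x)"

definition monotone_fun :: "('a::real_inner \<Rightarrow> 'a) \<Rightarrow> bool" where
  "monotone_fun B \<longleftrightarrow> (\<forall>x y. inner (x - y) (B x - B y) \<ge> 0)"

definition lipschitz_op :: "real \<Rightarrow> ('a::real_normed_vector \<Rightarrow> 'a) \<Rightarrow> bool" where
  "lipschitz_op L B \<longleftrightarrow> (\<forall>x y. norm (B x - B y) \<le> L * norm (x - y))"

definition cocoercive :: "real \<Rightarrow> ('a::real_inner \<Rightarrow> 'a) \<Rightarrow> bool" where
  "cocoercive \<beta> C \<longleftrightarrow> (\<forall>x y. inner (x - y) (C x - C y) \<ge> \<beta> * (norm (C x - C y))\<^sup>2)"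

text \<open>Resolvent J_{\<gamma>A} = (Id + \<gamma>A)^{-1}: J z is the (unique, for maximal monotone A and
  \<gamma> > 0) point x with z \<in> x + \<gamma> A x.\<close>
definition resolvent :: "real \<Rightarrow> ('a::real_inner \<Rightarrow> 'a set) \<Rightarrow> 'a \<Rightarrow> 'a" where
  "resolvent \<gamma> A z = (THE x. \<exists>u \<in> A x. z = x + \<gamma> *\<^sub>R u)"

definition zer :: "('a::real_vector \<Rightarrow> 'a set) \<Rightarrow> 'a set" where
  "zer T = {x. 0 \<in> T x}"

definition op_sum4 :: "('a::real_vector \<Rightarrow> 'a set) \<Rightarrow> ('a \<Rightarrow> 'a set) \<Rightarrow> ('a \<Rightarrow> 'a) \<Rightarrow> ('a \<Rightarrow> 'a)
    \<Rightarrow> 'a \<Rightarrow> 'a set" where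
  "op_sum4 A1 A2 B C x = {a + b + B x + C x | a b. a \<in> A1 x \<and> b \<in> A2 x}"

definition weakly_converges :: "(nat \<Rightarrow> 'a::real_inner) \<Rightarrow> 'a \<Rightarrow> bool" where
  "weakly_converges s l \<longleftrightarrow> (\<forall>w. ((\<lambda>n. inner (s n) w) \<longlongrightarrow> inner l w) sequentially)"

end

theory Submission
  imports Defs "HOL-Analysis.Analysis" "HOL-Library.Diagonal_Subsequence"
begin

lemma inv_Suc_tendsto: "(\<lambda>n. 1 / real (Suc n)) \<longlonglongrightarrow> 0"
  using LIMSEQ_inverse_real_of_nat unfolding inverse_eq_divide .

lemma parallelogram_norm:
  fixes a b :: "'a::real_inner"
  shows "(norm (a - b))\<^sup>2 = 2 * (norm a)\<^sup>2 + 2 * (norm b)\<^sup>2 - (norm (a + b))\<^sup>2"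
  by (simp add: power2_norm_eq_inner inner_diff_left inner_diff_right inner_add_left inner_add_right inner_commute)

lemma Cauchy_of_sq_bound:
  fixes x :: "nat \<Rightarrow> 'a::real_normed_vector"
  assumes b: "\<And>n m. n \<le> m \<Longrightarrow> (norm (x n - x m))\<^sup>2 \<le> g n" and g: "g \<longlonglongrightarrow> 0"
  shows "Cauchy x"
proof (rule CauchyI)
  fix e :: real assume e: "0 < e"
  then have "e\<^sup>2 > 0" by simp
  then have "eventually (\<lambda>n. g n < e\<^sup>2) sequentially"
    using order_tendstoD(2)[OF g] by blast
  then obtain M where M: "\<And>n. n \<ge> M \<Longrightarrow> g n < e\<^sup>2" by (auto simp: eventually_sequentially)
  have "norm (x m - x n) < e" if "m \<ge> M" "n \<ge> M" for m n
  proof -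
    have "(norm (x m - x n))\<^sup>2 < e\<^sup>2"
    proof (cases "m \<le> n")
      case True thus ?thesis using b[OF True] M[OF that(1)] by linarith
    next
      case False then have "n \<le> m" by simp
      then have "(norm (x n - x m))\<^sup>2 \<le> g n" by (rule b)
      moreover have "norm (x n - x m) = norm (x m - x n)" by (rule norm_minus_commute)
      ultimately show ?thesis using M[OF that(2)] by simp
    qed
    then show ?thesis by (rule power2_less_imp_less) (use e in linarith)
  qed
  thus "\<exists>M. \<forall>m\<ge>M. \<forall>n\<ge>M. norm (x m - x n) < e" by blast
qed

lemma min_norm_ineq:
  fixes S :: "'a::real_inner set"
  assumes "convex S" "x \<in> S" "\<forall>y\<in>S. norm x \<le> norm y" "y \<in> S"
  shows "(norm (x - y))\<^sup>2 \<le> 2 * (norm y)\<^sup>2 - 2 * (norm x)\<^sup>2"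
proof -
  have "(1/2) *\<^sub>R x + (1/2) *\<^sub>R y \<in> S" using assms(1,2,4) by (simp add: convexD)
  then have "norm x \<le> norm ((1/2) *\<^sub>R (x + y))" using assms(3) by (simp add: scaleR_add_right)
  then have "norm x \<le> norm (x + y) / 2" by simp
  then have "(norm x)\<^sup>2 \<le> (norm (x+y) / 2)\<^sup>2" by (simp add: power_mono)
  then have "4 * (norm x)\<^sup>2 \<le> (norm (x+y))\<^sup>2" by (simp add: power_divide)
  thus ?thesis using parallelogram_norm[of x y] by linarith
qed

lemma min_norm_exists:
  fixes S :: "'a::{real_inner,complete_space} set"
  assumes "closed S" "convex S" "S \<noteq> {}"
  shows "\<exists>x\<in>S. \<forall>y\<in>S. norm x \<le> norm y"
proof -
  define \<delta> where "\<delta> = Inf (norm ` S)"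
  have bdd: "bdd_below (norm ` S)" by (rule bdd_belowI[of _ 0]) auto
  have ex: "\<exists>x\<in>S. (norm x)\<^sup>2 < \<delta>\<^sup>2 + 1 / Suc n" for n
  proof -
    have d0: "\<delta> \<ge> 0" unfolding \<delta>_def using assms(3) by (auto intro: cInf_greatest)
    define e where "e = sqrt (\<delta>\<^sup>2 + 1 / Suc n)"
    have "e > \<delta>" unfolding e_def using d0
      by (metis add.commute less_add_same_cancel2 of_nat_0_less_iff real_sqrt_abs real_sqrt_less_mono zero_less_Suc zero_less_divide_1_iff abs_of_nonneg)
    then obtain x where "x \<in> S" "norm x < e" unfolding \<delta>_def using cInf_less_iff[of "norm ` S" e] bdd assms(3) by auto
    then have "(norm x)\<^sup>2 < e\<^sup>2" by (simp add: power_strict_mono)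
    thus ?thesis using \<open>x \<in> S\<close> unfolding e_def
      by (metis add_nonneg_nonneg of_nat_0_le_iff real_sqrt_pow2 zero_le_divide_1_iff zero_le_power2)
  qed
  then obtain x where xS: "\<And>n. x n \<in> S" and xn: "\<And>n. (norm (x n))\<^sup>2 < \<delta>\<^sup>2 + 1 / Suc n"
    by metis
  have low: "\<delta> \<le> norm y" if "y \<in> S" for y unfolding \<delta>_def using that bdd by (auto intro: cInf_lower)
  have d0: "\<delta> \<ge> 0" unfolding \<delta>_def using assms(3) by (auto intro: cInf_greatest)
  have lowsq: "\<delta>\<^sup>2 \<le> (norm y)\<^sup>2" if "y \<in> S" for y using low[OF that] d0 by (simp add: power_mono)
  have "Cauchy x"
  proof (rule Cauchy_of_sq_bound[where g = "\<lambda>n. 4 / Suc n"])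
    fix n m :: nat assume "n \<le> m"
    have mid: "(1/2) *\<^sub>R x n + (1/2) *\<^sub>R x m \<in> S" using assms(2) xS by (simp add: convexD)
    have "norm ((1/2) *\<^sub>R (x n + x m)) = norm (x n + x m) / 2" by simp
    then have "\<delta> \<le> norm (x n + x m) / 2" using low[OF mid] by (simp add: scaleR_add_right)
    then have "\<delta>\<^sup>2 \<le> (norm (x n + x m) / 2)\<^sup>2" using d0 by (simp add: power_mono)
    then have A: "4 * \<delta>\<^sup>2 \<le> (norm (x n + x m))\<^sup>2" by (simp add: power_divide)
    have "1 / real (Suc m) \<le> 1 / Suc n" using \<open>n \<le> m\<close> by (simp add: frac_le)
    then show "(norm (x n - x m))\<^sup>2 \<le> 4 / Suc n"
      using parallelogram_norm[of "x n" "x m"] xn[of n] xn[of m] A by simp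
  next
    show "(\<lambda>n. 4 / real (Suc n)) \<longlonglongrightarrow> 0"
      using tendsto_mult_right_zero[OF LIMSEQ_inverse_real_of_nat, of 4]
      by (simp add: divide_inverse)
  qed
  then obtain l where l: "x \<longlonglongrightarrow> l" using Cauchy_convergent convergent_def by blast
  have lS: "l \<in> S" using closed_sequentially[OF assms(1)] xS l by blast
  have "(\<lambda>n. (norm (x n))\<^sup>2) \<longlonglongrightarrow> (norm l)\<^sup>2" by (intro tendsto_intros l)
  moreover have "(\<lambda>n. \<delta>\<^sup>2 + 1 / Suc n) \<longlonglongrightarrow> \<delta>\<^sup>2 + 0"
    by (intro tendsto_intros inv_Suc_tendsto)
  ultimately have "(norm l)\<^sup>2 \<le> \<delta>\<^sup>2"
    using xn by (intro LIMSEQ_le) (auto intro: less_imp_le)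
  then have "norm l \<le> \<delta>" using d0 by (simp add: power2_le_iff_abs_le)
  thus ?thesis using lS low by force
qed

lemma null_of_sq_bound:
  fixes u :: "nat \<Rightarrow> 'a::real_normed_vector"
  assumes "\<And>n. (norm (u n))\<^sup>2 \<le> g n" "g \<longlonglongrightarrow> 0"
  shows "u \<longlonglongrightarrow> 0"
proof (rule Lim_null_comparison)
  show "\<forall>\<^sub>F n in sequentially. norm (u n) \<le> sqrt (g n)"
    using assms(1) by (intro always_eventually allI real_le_rsqrt) auto
  show "(\<lambda>n. sqrt (g n)) \<longlonglongrightarrow> 0" using tendsto_real_sqrt[OF assms(2)] by simp
qed

lemma closed_convex_FIP:
  fixes K0 :: "'a::{real_inner,complete_space} set" and KK :: "'a set set"
  assumes K0: "closed K0" "convex K0" "bounded K0"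
    and KK: "\<And>K. K \<in> KK \<Longrightarrow> closed K \<and> convex K"
    and fip: "\<And>F. finite F \<Longrightarrow> F \<subseteq> KK \<Longrightarrow> K0 \<inter> \<Inter>F \<noteq> {}"
  shows "K0 \<inter> \<Inter>KK \<noteq> {}"
proof -
  define S where "S F = K0 \<inter> \<Inter>F" for F
  have Scc: "closed (S F) \<and> convex (S F) \<and> S F \<noteq> {}" if "finite F" "F \<subseteq> KK" for F
  proof -
    have "closed (\<Inter>F)" using KK that(2) by (intro closed_Inter) auto
    moreover have "convex (\<Inter>F)" using KK that(2) by (intro convex_Inter) auto
    ultimately show ?thesis unfolding S_def using K0 fip[OF that]
      by (simp add: closed_Int convex_Int)
  qed
  define mn where "mn F = (SOME x. x \<in> S F \<and> (\<forall>y\<in>S F. norm x \<le> norm y))" for F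
  have mn: "mn F \<in> S F \<and> (\<forall>y\<in>S F. norm (mn F) \<le> norm y)" if "finite F" "F \<subseteq> KK" for F
  proof -
    have "closed (S F)" "convex (S F)" "S F \<noteq> {}" using Scc[OF that] by auto
    from min_norm_exists[OF this] obtain x where "x \<in> S F \<and> (\<forall>y\<in>S F. norm x \<le> norm y)" by blast
    then show ?thesis unfolding mn_def by (rule someI)
  qed
  obtain M where M: "\<And>x. x \<in> K0 \<Longrightarrow> norm x \<le> M" using K0(3) unfolding bounded_iff by blast
  define R where "R = {norm (mn F) | F. finite F \<and> F \<subseteq> KK}"
  define r where "r = Sup R"
  have bddR: "bdd_above R" unfolding R_def
    using mn M unfolding S_def by (intro bdd_aboveI[of _ M]) blast
  have neR: "R \<noteq> {}" unfolding R_def by blast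
  have le_r: "norm (mn F) \<le> r" if "finite F" "F \<subseteq> KK" for F
    unfolding r_def using that bddR by (intro cSup_upper) (auto simp: R_def)
  have r0: "0 \<le> r" using order_trans[OF norm_ge_zero le_r[of "{}"]] by simp
  have "\<exists>F. finite F \<and> F \<subseteq> KK \<and> r - 1 / Suc n < norm (mn F)" for n
  proof -
    have "r - 1 / Suc n < Sup R" unfolding r_def by simp
    then show ?thesis using less_cSup_iff[OF neR bddR] unfolding R_def by blast
  qed
  then obtain FF where FF: "\<And>n. finite (FF n) \<and> FF n \<subseteq> KK \<and> r - 1 / Suc n < norm (mn (FF n))"
    by metis
  define G where "G n = \<Union> (FF ` {..n})" for n
  have G: "finite (G n)" "G n \<subseteq> KK" for n unfolding G_def using FF by auto
  have Gmono: "G n \<subseteq> G m" if "n \<le> m" for n m unfolding G_def using that by (intro UN_mono) auto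
  have mnmono: "norm (mn F) \<le> norm (mn F')" if "finite F'" "F' \<subseteq> KK" "F \<subseteq> F'" for F F'
  proof -
    have "finite F" "F \<subseteq> KK" using that finite_subset by auto
    moreover have "mn F' \<in> S F" using mn[OF that(1,2)] that(3) unfolding S_def by auto
    ultimately show ?thesis using mn by blast
  qed
  define xs where "xs n = mn (G n)" for n
  have xs_low: "r - 1 / Suc n < norm (xs n)" for n
    using FF[of n] mnmono[OF G(1,2), of "FF n" n] unfolding xs_def G_def by fastforce
  have xs_up: "norm (xs n) \<le> r" for n unfolding xs_def using le_r G by blast
  have nxs: "(\<lambda>n. norm (xs n)) \<longlonglongrightarrow> r"
  proof (rule tendsto_sandwich[of "\<lambda>n. r - 1 / Suc n" _ _ "\<lambda>n. r"])
    show "\<forall>\<^sub>F n in sequentially. r - 1 / real (Suc n) \<le> norm (xs n)"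
      using xs_low by (intro always_eventually allI less_imp_le)
    show "\<forall>\<^sub>F n in sequentially. norm (xs n) \<le> r" using xs_up by simp
    show "(\<lambda>n. r - 1 / real (Suc n)) \<longlonglongrightarrow> r"
      using tendsto_diff[OF tendsto_const inv_Suc_tendsto, of r] by simp
  qed simp
  define g where "g n = 2 * r\<^sup>2 - 2 * (norm (xs n))\<^sup>2" for n
  have g0: "g \<longlonglongrightarrow> 0" unfolding g_def
    using tendsto_diff[OF tendsto_const tendsto_mult[OF tendsto_const tendsto_power[OF nxs, of 2]], of "2 * r\<^sup>2" 2]
    by simp
  have key: "(norm (xs n - y))\<^sup>2 \<le> g n" if "y \<in> S (G n)" "norm y \<le> r" for n y
  proof -
    have "(norm (xs n - y))\<^sup>2 \<le> 2 * (norm y)\<^sup>2 - 2 * (norm (xs n))\<^sup>2"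
      using min_norm_ineq[of "S (G n)" "xs n" y] Scc[OF G] mn[OF G] that(1) unfolding xs_def by blast
    moreover have "(norm y)\<^sup>2 \<le> r\<^sup>2" using that(2) by (simp add: power_mono)
    ultimately show ?thesis unfolding g_def by linarith
  qed
  have SG: "S (G m) \<subseteq> S (G n)" if "n \<le> m" for n m
    unfolding S_def using Gmono[OF that] by auto
  have "Cauchy xs"
  proof (rule Cauchy_of_sq_bound[OF _ g0])
    fix n m :: nat assume "n \<le> m"
    have "xs m \<in> S (G n)" using mn[OF G, of m] SG[OF \<open>n \<le> m\<close>] unfolding xs_def by blast
    then show "(norm (xs n - xs m))\<^sup>2 \<le> g n" using key xs_up by blast
  qed
  then obtain l where l: "xs \<longlonglongrightarrow> l" using Cauchy_convergent convergent_def by blast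
  have "l \<in> K0"
    using closed_sequentially[OF K0(1), of xs l] l mn[OF G] unfolding xs_def S_def by blast
  moreover have "l \<in> K" if "K \<in> KK" for K
  proof -
    define ys where "ys n = mn (insert K (G n))" for n
    have fin: "finite (insert K (G n))" "insert K (G n) \<subseteq> KK" for n using G that by auto
    have ysS: "ys n \<in> S (G n)" "ys n \<in> K" for n using mn[OF fin] unfolding ys_def S_def by auto
    have ysr: "norm (ys n) \<le> r" for n unfolding ys_def using le_r[OF fin] .
    have "(\<lambda>n. xs n - ys n) \<longlonglongrightarrow> 0"
      using key[OF ysS(1) ysr] g0 by (rule null_of_sq_bound)
    then have "(\<lambda>n. xs n - (xs n - ys n)) \<longlonglongrightarrow> l - 0" by (intro tendsto_diff l)
    then have "ys \<longlonglongrightarrow> l" by simp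
    then show "l \<in> K" using closed_sequentially[of K ys l] KK[OF that] ysS(2) by blast
  qed
  ultimately show ?thesis by blast
qed

lemma continuous_on_Max_finite:
  fixes h :: "'b \<Rightarrow> 'a::topological_space \<Rightarrow> real"
  assumes "finite G" "G \<noteq> {}" "\<And>g. g \<in> G \<Longrightarrow> continuous_on D (h g)"
  shows "continuous_on D (\<lambda>x. Max ((\<lambda>g. h g x) ` G))"
  using assms
proof (induction G rule: finite_ne_induct)
  case (singleton g) thus ?case by simp
next
  case (insert g G)
  have eq: "(\<lambda>x. Max ((\<lambda>g. h g x) ` insert g G)) = (\<lambda>x. max (h g x) (Max ((\<lambda>g. h g x) ` G)))"
    using insert.hyps by (auto simp: Max_insert)
  show ?case unfolding eq using insert by (intro continuous_on_max) auto
qed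

lemma hull_image_repr:
  fixes c :: "'b \<Rightarrow> 'a::real_vector"
  assumes "finite I"
  shows "convex hull (c ` I) \<subseteq> {\<Sum>g\<in>I. \<mu> g *\<^sub>R c g | \<mu>. (\<forall>g\<in>I. 0 \<le> \<mu> g) \<and> sum \<mu> I = 1}"
proof (rule hull_minimal)
  show "c ` I \<subseteq> {\<Sum>g\<in>I. \<mu> g *\<^sub>R c g | \<mu>. (\<forall>g\<in>I. 0 \<le> \<mu> g) \<and> sum \<mu> I = 1}"
  proof
    fix y assume "y \<in> c ` I"
    then obtain g0 where g0: "g0 \<in> I" "y = c g0" by auto
    define \<mu> where "\<mu> g = (if g = g0 then 1 else 0::real)" for g
    have "sum \<mu> I = 1" unfolding \<mu>_def using g0 assms by (simp add: sum.delta)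
    moreover have "(\<Sum>g\<in>I. \<mu> g *\<^sub>R c g) = y" unfolding \<mu>_def using g0 assms
      by (simp add: if_distrib[of "\<lambda>r. r *\<^sub>R _"] sum.delta cong: if_cong)
    ultimately show "y \<in> {\<Sum>g\<in>I. \<mu> g *\<^sub>R c g | \<mu>. (\<forall>g\<in>I. 0 \<le> \<mu> g) \<and> sum \<mu> I = 1}"
      unfolding \<mu>_def by force
  qed
  show "convex {\<Sum>g\<in>I. \<mu> g *\<^sub>R c g | \<mu>. (\<forall>g\<in>I. 0 \<le> \<mu> g) \<and> sum \<mu> I = 1}"
  proof (rule convexI)
    fix x y :: 'a and u v :: real
    assume x: "x \<in> {\<Sum>g\<in>I. \<mu> g *\<^sub>R c g | \<mu>. (\<forall>g\<in>I. 0 \<le> \<mu> g) \<and> sum \<mu> I = 1}"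
      and y: "y \<in> {\<Sum>g\<in>I. \<mu> g *\<^sub>R c g | \<mu>. (\<forall>g\<in>I. 0 \<le> \<mu> g) \<and> sum \<mu> I = 1}"
      and uv: "0 \<le> u" "0 \<le> v" "u + v = 1"
    obtain \<mu>1 where m1: "x = (\<Sum>g\<in>I. \<mu>1 g *\<^sub>R c g)" "\<forall>g\<in>I. 0 \<le> \<mu>1 g" "sum \<mu>1 I = 1" using x by blast
    obtain \<mu>2 where m2: "y = (\<Sum>g\<in>I. \<mu>2 g *\<^sub>R c g)" "\<forall>g\<in>I. 0 \<le> \<mu>2 g" "sum \<mu>2 I = 1" using y by blast
    define \<mu> where "\<mu> g = u * \<mu>1 g + v * \<mu>2 g" for g
    have "\<forall>g\<in>I. 0 \<le> \<mu> g" unfolding \<mu>_def using m1 m2 uv by simp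
    moreover have "sum \<mu> I = 1" unfolding \<mu>_def using m1 m2 uv
      by (simp add: sum.distrib sum_distrib_left[symmetric])
    moreover have "u *\<^sub>R x + v *\<^sub>R y = (\<Sum>g\<in>I. \<mu> g *\<^sub>R c g)" unfolding \<mu>_def m1 m2
      by (simp add: scaleR_sum_right scaleR_add_left sum.distrib)
    ultimately show "u *\<^sub>R x + v *\<^sub>R y \<in> {\<Sum>g\<in>I. \<mu> g *\<^sub>R c g | \<mu>. (\<forall>g\<in>I. 0 \<le> \<mu> g) \<and> sum \<mu> I = 1}"
      by blast
  qed
qed

lemma norm_sub_scale_sq:
  fixes a b :: "'a::real_inner"
  shows "(norm (a - s *\<^sub>R b))\<^sup>2 = (norm a)\<^sup>2 - 2 * s * inner a b + s * (s * (norm b)\<^sup>2)"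
  unfolding power2_norm_eq_inner inner_diff_left inner_diff_right inner_scaleR_left inner_scaleR_right
  by (simp add: inner_commute[of b a] algebra_simps)

lemma proj_char:
  fixes K :: "'a::real_inner set"
  assumes "convex K" "q \<in> K" "\<forall>k\<in>K. norm (x0 - q) \<le> norm (x0 - k)" "k \<in> K"
  shows "inner (x0 - q) (k - q) \<le> 0"
proof (rule ccontr)
  assume "\<not> ?thesis"
  then have a: "inner (x0 - q) (k - q) > 0" by simp
  define \<alpha> where "\<alpha> = inner (x0 - q) (k - q)"
  have "k \<noteq> q" using a by auto
  then have n: "(norm (k - q))\<^sup>2 > 0" by simp
  define s where "s = min 1 (\<alpha> / (norm (k - q))\<^sup>2)"
  have a': "\<alpha> > 0" using a unfolding \<alpha>_def .
  have s: "0 < s" "s \<le> 1" "s * (norm (k - q))\<^sup>2 \<le> \<alpha>"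
  proof -
    show "0 < s" unfolding s_def using a' n by simp
    show "s \<le> 1" unfolding s_def by simp
    show "s * (norm (k - q))\<^sup>2 \<le> \<alpha>"
    proof (cases "\<alpha> / (norm (k - q))\<^sup>2 \<le> 1")
      case True thus ?thesis unfolding s_def using n by simp
    next
      case False
      then have "(norm (k - q))\<^sup>2 < \<alpha>" using n by (simp add: field_simps)
      thus ?thesis unfolding s_def using False by simp
    qed
  qed
  have "(1 - s) *\<^sub>R q + s *\<^sub>R k \<in> K" by (rule convexD[OF assms(1) assms(2) assms(4)]) (use s in auto)
  then have "norm (x0 - q) \<le> norm (x0 - ((1 - s) *\<^sub>R q + s *\<^sub>R k))" using assms(3) by blast
  moreover have "x0 - ((1 - s) *\<^sub>R q + s *\<^sub>R k) = (x0 - q) - s *\<^sub>R (k - q)"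
    by (simp add: algebra_simps)
  ultimately have "norm (x0 - q) \<le> norm ((x0 - q) - s *\<^sub>R (k - q))" by simp
  then have "(norm (x0 - q))\<^sup>2 \<le> (norm ((x0 - q) - s *\<^sub>R (k - q)))\<^sup>2"
    by (rule power_mono) simp
  also have "\<dots> = (norm (x0 - q))\<^sup>2 - 2 * s * \<alpha> + s * (s * (norm (k - q))\<^sup>2)"
    unfolding \<alpha>_def by (rule norm_sub_scale_sq)
  finally have "2 * s * \<alpha> \<le> s * (s * (norm (k - q))\<^sup>2)" by simp
  moreover have "s * (s * (norm (k - q))\<^sup>2) \<le> s * \<alpha>" using s by (intro mult_left_mono) auto
  ultimately have "s * \<alpha> \<le> 0" by linarith
  moreover have "s * \<alpha> > 0" using s(1) a' by simp
  ultimately show False by linarith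
qed

lemma mono_avg:
  fixes I :: "('a::real_inner \<times> 'a) set"
  assumes fin: "finite I" and nn: "\<forall>g\<in>I. 0 \<le> \<mu> g" and s1: "sum \<mu> I = 1"
    and mono: "\<And>g g'. g \<in> I \<Longrightarrow> g' \<in> I \<Longrightarrow> inner (fst g - fst g') (snd g - snd g') \<ge> 0"
    and x: "x = (\<Sum>g\<in>I. \<mu> g *\<^sub>R ((1/2) *\<^sub>R (fst g - snd g)))"
  shows "(\<Sum>g\<in>I. \<mu> g * inner (x - fst g) (x + snd g)) \<le> 0"
proof -
  define a where "a = (fst :: 'a \<times> 'a \<Rightarrow> 'a)"
  define p where "p = (snd :: 'a \<times> 'a \<Rightarrow> 'a)"
  define A where "A = (\<Sum>g\<in>I. \<mu> g *\<^sub>R a g)"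
  define P where "P = (\<Sum>g\<in>I. \<mu> g *\<^sub>R p g)"
  have xAP: "x = (1/2) *\<^sub>R (A - P)"
    unfolding x A_def P_def a_def p_def
    by (simp add: scaleR_sum_right scaleR_right_diff_distrib sum_subtractf scaleR_left_commute[of "1/2"])
  have pw1: "\<mu> g * inner (x - a g) (x + p g) = \<mu> g * inner x x + \<mu> g * inner x (p g) - \<mu> g * inner (a g) x - \<mu> g * inner (a g) (p g)" for g
    by (simp add: inner_diff_left inner_add_right algebra_simps)
  have S1: "(\<Sum>g\<in>I. \<mu> g * inner (x - a g) (x + p g)) = inner x x + inner x P - inner A x - (\<Sum>g\<in>I. \<mu> g * inner (a g) (p g))"
  proof -
    have "(\<Sum>g\<in>I. \<mu> g * inner (x - a g) (x + p g)) = (\<Sum>g\<in>I. \<mu> g * inner x x) + (\<Sum>g\<in>I. \<mu> g * inner x (p g)) - (\<Sum>g\<in>I. \<mu> g * inner (a g) x) - (\<Sum>g\<in>I. \<mu> g * inner (a g) (p g))"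
      unfolding pw1 by (simp add: sum.distrib sum_subtractf)
    also have "(\<Sum>g\<in>I. \<mu> g * inner x x) = inner x x" using s1 by (simp add: sum_distrib_right[symmetric])
    also have "(\<Sum>g\<in>I. \<mu> g * inner x (p g)) = inner x P" unfolding P_def by (simp add: inner_sum_right)
    also have "(\<Sum>g\<in>I. \<mu> g * inner (a g) x) = inner A x" unfolding A_def by (simp add: inner_sum_left)
    finally show ?thesis .
  qed
  define D where "D = (\<Sum>g\<in>I. \<Sum>g'\<in>I. \<mu> g * \<mu> g' * inner (a g - a g') (p g - p g'))"
  have D0: "D \<ge> 0" unfolding D_def a_def p_def using nn mono
    by (intro sum_nonneg mult_nonneg_nonneg) auto
  have pw2: "\<mu> g * \<mu> g' * inner (a g - a g') (p g - p g') = \<mu> g * \<mu> g' * inner (a g) (p g) - \<mu> g * \<mu> g' * inner (a g) (p g') - \<mu> g * \<mu> g' * inner (a g') (p g) + \<mu> g * \<mu> g' * inner (a g') (p g')" for g g'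
    by (simp add: inner_diff_left inner_diff_right algebra_simps)
  have t1: "(\<Sum>g'\<in>I. \<mu> g * \<mu> g' * inner (a g) (p g)) = \<mu> g * inner (a g) (p g)" for g
  proof -
    have "(\<Sum>g'\<in>I. \<mu> g * \<mu> g' * inner (a g) (p g)) = (\<Sum>g'\<in>I. \<mu> g') * (\<mu> g * inner (a g) (p g))"
      by (subst sum_distrib_right) (simp add: mult_ac)
    thus ?thesis using s1 by simp
  qed
  have t4: "(\<Sum>g\<in>I. \<Sum>g'\<in>I. \<mu> g * \<mu> g' * inner (a g') (p g')) = (\<Sum>g\<in>I. \<mu> g * inner (a g) (p g))"
  proof -
    have "(\<Sum>g\<in>I. \<Sum>g'\<in>I. \<mu> g * \<mu> g' * inner (a g') (p g')) = (\<Sum>g'\<in>I. \<Sum>g\<in>I. \<mu> g' * \<mu> g * inner (a g') (p g'))"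
      by (subst sum.swap) (simp add: mult_ac)
    thus ?thesis using t1 by simp
  qed
  have t2: "(\<Sum>g\<in>I. \<Sum>g'\<in>I. \<mu> g * \<mu> g' * inner (a g) (p g')) = inner A P"
    unfolding A_def inner_sum_left inner_scaleR_left P_def inner_sum_right inner_scaleR_right
    by (simp add: sum_distrib_left mult_ac, subst sum.swap, simp add: mult_ac)
  have t3: "(\<Sum>g\<in>I. \<Sum>g'\<in>I. \<mu> g * \<mu> g' * inner (a g') (p g)) = inner A P"
  proof -
    have "(\<Sum>g\<in>I. \<Sum>g'\<in>I. \<mu> g * \<mu> g' * inner (a g') (p g)) = (\<Sum>g'\<in>I. \<Sum>g\<in>I. \<mu> g' * \<mu> g * inner (a g') (p g))"
      by (subst sum.swap) (simp add: mult_ac)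
    thus ?thesis using t2 by simp
  qed
  have "D = (\<Sum>g\<in>I. \<Sum>g'\<in>I. \<mu> g * \<mu> g' * inner (a g) (p g)) - (\<Sum>g\<in>I. \<Sum>g'\<in>I. \<mu> g * \<mu> g' * inner (a g) (p g')) - (\<Sum>g\<in>I. \<Sum>g'\<in>I. \<mu> g * \<mu> g' * inner (a g') (p g)) + (\<Sum>g\<in>I. \<Sum>g'\<in>I. \<mu> g * \<mu> g' * inner (a g') (p g'))"
    unfolding D_def pw2 by (simp add: sum.distrib sum_subtractf)
  also have "\<dots> = 2 * (\<Sum>g\<in>I. \<mu> g * inner (a g) (p g)) - 2 * inner A P"
    unfolding t1 t2 t3 t4 by simp
  finally have DD: "D = 2 * (\<Sum>g\<in>I. \<mu> g * inner (a g) (p g)) - 2 * inner A P" .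
  have fin_eq: "inner x x + inner x P - inner A x - inner A P = - (1/4) * inner (A + P) (A + P)"
    unfolding xAP by (simp add: inner_diff_left inner_diff_right inner_add_left inner_add_right inner_commute algebra_simps)
  have "0 \<le> inner (A + P) (A + P)" by simp
  then have "(\<Sum>g\<in>I. \<mu> g * inner (x - a g) (x + p g)) \<le> 0"
    unfolding S1 using D0 DD fin_eq by linarith
  thus ?thesis unfolding a_def p_def .
qed

lemma h_shift:
  fixes x v a p :: "'a::real_inner"
  shows "inner (x + t *\<^sub>R v - a) (x + t *\<^sub>R v + p) = inner (x - a) (x + p) + 2 * t * inner v (x - (1/2) *\<^sub>R (a - p)) + t * t * inner v v"
  by (simp add: inner_diff_left inner_diff_right inner_add_left inner_add_right inner_commute algebra_simps)

lemma finite_mono_ext: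
  fixes G :: "('a::real_inner \<times> 'a) set"
  assumes fin: "finite G"
    and mono: "\<And>g g'. g \<in> G \<Longrightarrow> g' \<in> G \<Longrightarrow> inner (fst g - fst g') (snd g - snd g') \<ge> 0"
  shows "\<exists>x. \<forall>g\<in>G. inner (x - fst g) (x + snd g) \<le> 0"
proof (cases "G = {}")
  case True thus ?thesis by simp
next
  case Gne: False
  define c where "c g = (1/2) *\<^sub>R (fst g - snd g)" for g :: "'a \<times> 'a"
  define h where "h g x = inner (x - fst g) (x + snd g)" for g :: "'a \<times> 'a" and x
  define D where "D = convex hull (c ` G)"
  define H where "H x = Max ((\<lambda>g. h g x) ` G)" for x
  have Dc: "compact D" unfolding D_def using fin by (intro finite_imp_compact_convex_hull) simp
  have Dne: "D \<noteq> {}" unfolding D_def using Gne by simp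
  have Hc: "continuous_on D H" unfolding H_def h_def
    using fin Gne by (intro continuous_on_Max_finite) (auto intro!: continuous_intros)
  obtain x0 where x0: "x0 \<in> D" "\<And>y. y \<in> D \<Longrightarrow> H x0 \<le> H y"
    using continuous_attains_inf[OF Dc Dne Hc] by blast
  define m where "m = H x0"
  have hle: "h g y \<le> H y" if "g \<in> G" for g y unfolding H_def using fin that by simp
  show ?thesis
  proof (cases "m \<le> 0")
    case True
    then show ?thesis using hle unfolding m_def h_def by (meson order_trans)
  next
    case False
    then have m0: "m > 0" by simp
    define I where "I = {g \<in> G. h g x0 = m}"
    have finI: "finite I" unfolding I_def using fin by simp
    have IG: "I \<subseteq> G" unfolding I_def by auto
    have "m \<in> (\<lambda>g. h g x0) ` G" unfolding m_def H_def using fin Gne by (intro Max_in) auto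
    then have Ine: "I \<noteq> {}" unfolding I_def by auto
    define K where "K = convex hull (c ` I)"
    have Kc: "compact K" unfolding K_def using finI by (intro finite_imp_compact_convex_hull) simp
    have Kne: "K \<noteq> {}" unfolding K_def using Ine by simp
    have Kconv: "convex K" unfolding K_def by simp
    have KD: "K \<subseteq> D" unfolding K_def D_def using IG by (intro hull_mono image_mono)
    have Dconv: "convex D" unfolding D_def by simp
    have "continuous_on K (\<lambda>k. norm (x0 - k))" by (intro continuous_intros)
    then obtain q where q: "q \<in> K" "\<And>k. k \<in> K \<Longrightarrow> norm (x0 - q) \<le> norm (x0 - k)"
      using continuous_attains_inf[OF Kc Kne] by blast
    have cK: "c g \<in> K" if "g \<in> I" for g unfolding K_def using that by (simp add: hull_inc)
    show ?thesis
    proof (cases "q = x0")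
      case True
      then have "x0 \<in> K" using q by simp
      then obtain \<mu> where mu: "\<forall>g\<in>I. 0 \<le> \<mu> g" "sum \<mu> I = 1" "x0 = (\<Sum>g\<in>I. \<mu> g *\<^sub>R c g)"
        using hull_image_repr[OF finI, of c] unfolding K_def by blast
      have "(\<Sum>g\<in>I. \<mu> g * inner (x0 - fst g) (x0 + snd g)) \<le> 0"
        using mono_avg[OF finI mu(1,2)] mono IG mu(3) unfolding c_def by blast
      moreover have "(\<Sum>g\<in>I. \<mu> g * inner (x0 - fst g) (x0 + snd g)) = (\<Sum>g\<in>I. \<mu> g * m)"
        unfolding I_def h_def by (intro sum.cong) auto
      moreover have "(\<Sum>g\<in>I. \<mu> g * m) = m" using mu(2) by (simp add: sum_distrib_right[symmetric])
      ultimately show ?thesis using m0 by linarith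
    next
      case False
      define v where "v = q - x0"
      have v0: "inner v v > 0" unfolding v_def using False by simp
      define xt where "xt t = x0 + t *\<^sub>R v" for t :: real
      have act: "h g (xt t) < m" if "g \<in> I" "0 < t" "t < 1" for g t
      proof -
        have pc: "inner (x0 - q) (c g - q) \<le> 0"
          using proj_char[OF Kconv q(1) _ cK[OF that(1)]] q(2) by blast
        have "inner v (x0 - c g) = - inner v v + inner (x0 - q) (c g - q)"
          unfolding v_def by (simp add: inner_diff_left inner_diff_right inner_commute algebra_simps)
        then have iv: "inner v (x0 - c g) \<le> - inner v v" using pc by linarith
        have "h g (xt t) = h g x0 + 2 * t * inner v (x0 - c g) + t * t * inner v v"
          unfolding h_def xt_def c_def by (rule h_shift)
        also have "h g x0 = m" using that(1) unfolding I_def by simp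
        finally have "h g (xt t) = m + 2 * t * inner v (x0 - c g) + t * t * inner v v" .
        moreover have "2 * t * inner v (x0 - c g) \<le> 2 * t * (- inner v v)"
          using iv that(2) by (intro mult_left_mono) auto
        moreover have "t * t * inner v v < 2 * t * inner v v"
          using that(2,3) v0 by (intro mult_strict_right_mono) auto
        ultimately show ?thesis by linarith
      qed
      have ev: "\<forall>\<^sub>F t in at_right 0. 0 < t \<and> t < 1 \<and> (\<forall>g\<in>G. h g (xt t) < m)"
      proof -
        have e1: "\<forall>\<^sub>F t in at_right (0::real). 0 < t" by (rule eventually_at_right_less)
        have e2: "\<forall>\<^sub>F t in at_right (0::real). t < 1"
          using order_tendstoD(2)[OF tendsto_ident_at[of "0::real" "{0<..}"], of 1] by simp
        have e3: "\<forall>\<^sub>F t in at_right 0. h g (xt t) < m" if "g \<in> G" for g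
        proof (cases "g \<in> I")
          case True
          show ?thesis using eventually_conj[OF e1 e2] by (rule eventually_mono) (use act True in blast)
        next
          case False
          then have lt: "h g x0 < m" using hle[OF that, of x0] unfolding m_def I_def using that by auto
          have "((\<lambda>t. h g (xt t)) \<longlongrightarrow> h g (x0 + 0 *\<^sub>R v)) (at_right 0)"
            unfolding h_def xt_def by (intro tendsto_intros)
          then have "((\<lambda>t. h g (xt t)) \<longlongrightarrow> h g x0) (at_right 0)" by simp
          from order_tendstoD(2)[OF this lt] show ?thesis .
        qed
        have "\<forall>\<^sub>F t in at_right 0. \<forall>g\<in>G. h g (xt t) < m"
          by (rule eventually_ball_finite[OF fin]) (use e3 in blast)
        then show ?thesis using e1 e2 by (intro eventually_conj)
      qed
      obtain t where t: "0 < t" "t < 1" "\<forall>g\<in>G. h g (xt t) < m"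
        using eventually_happens[OF ev] by (auto simp: trivial_limit_def[symmetric])
      have "xt t = (1 - t) *\<^sub>R x0 + t *\<^sub>R q" unfolding xt_def v_def by (simp add: algebra_simps)
      also have "\<dots> \<in> D" using Dconv x0(1) KD q(1) t by (intro convexD) auto
      finally have "H x0 \<le> H (xt t)" using x0(2) by blast
      moreover have "H (xt t) < m" unfolding H_def using fin Gne t(3) by simp
      ultimately show ?thesis unfolding m_def by simp
    qed
  qed
qed

lemma maxmono_graph_ne:
  assumes "maximal_monotone A"
  shows "\<exists>a p. p \<in> A a"
proof (rule ccontr)
  assume ne: "\<not> (\<exists>a p. p \<in> A a)"
  then have "\<forall>y v. v \<in> A y \<longrightarrow> inner (0 - y) (0 - v) \<ge> 0" by blast
  then have "0 \<in> A 0" using assms unfolding maximal_monotone_def by blast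
  thus False using ne by blast
qed

lemma ball_char:
  fixes x a p :: "'a::real_inner"
  shows "inner (x - a) (x + p) \<le> 0 \<longleftrightarrow> x \<in> cball ((1/2) *\<^sub>R (a - p)) (norm ((1/2) *\<^sub>R (a + p)))"
proof -
  have eq: "inner (x - a) (x + p) = (norm (x - (1/2) *\<^sub>R (a - p)))\<^sup>2 - (norm ((1/2) *\<^sub>R (a + p)))\<^sup>2"
    unfolding power2_norm_eq_inner
    by (simp add: inner_diff_left inner_diff_right inner_add_left inner_add_right inner_commute algebra_simps)
  have "(norm (x - (1/2) *\<^sub>R (a - p)))\<^sup>2 \<le> (norm ((1/2) *\<^sub>R (a + p)))\<^sup>2 \<longleftrightarrow>
        norm (x - (1/2) *\<^sub>R (a - p)) \<le> norm ((1/2) *\<^sub>R (a + p))"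
    by (rule power2_le_iff_abs_le[THEN trans]) simp_all
  moreover have "dist ((1/2) *\<^sub>R (a - p)) x = norm (x - (1/2) *\<^sub>R (a - p))"
    by (simp add: dist_norm norm_minus_commute)
  ultimately show ?thesis unfolding eq mem_cball by linarith
qed

lemma minty0:
  fixes M :: "'a::{real_inner,complete_space} \<Rightarrow> 'a set"
  assumes mm: "maximal_monotone M"
  shows "\<exists>x. - x \<in> M x"
proof -
  define Gr where "Gr = {(a, p). p \<in> M a}"
  have mono: "inner (fst g - fst g') (snd g - snd g') \<ge> 0" if "g \<in> Gr" "g' \<in> Gr" for g g'
  proof -
    have m: "monotone_op M" using mm unfolding maximal_monotone_def by blast
    have "snd g \<in> M (fst g)" "snd g' \<in> M (fst g')" using that unfolding Gr_def by auto
    thus ?thesis using m unfolding monotone_op_def by blast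
  qed
  obtain a0 p0 where g0: "(a0, p0) \<in> Gr" using maxmono_graph_ne[OF mm] unfolding Gr_def by auto
  define Kf where "Kf g = {x. inner (x - fst g) (x + snd g) \<le> 0}" for g :: "'a \<times> 'a"
  have Kf_ball: "Kf g = cball ((1/2) *\<^sub>R (fst g - snd g)) (norm ((1/2) *\<^sub>R (fst g + snd g)))" for g
    unfolding Kf_def by (intro set_eqI) (simp only: mem_Collect_eq ball_char)
  have "Kf (a0, p0) \<inter> \<Inter>(Kf ` Gr) \<noteq> {}"
  proof (rule closed_convex_FIP)
    show "closed (Kf (a0, p0))" "convex (Kf (a0, p0))" "bounded (Kf (a0, p0))" unfolding Kf_ball by auto
    show "closed K \<and> convex K" if "K \<in> Kf ` Gr" for K using that unfolding Kf_ball by auto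
    show "Kf (a0, p0) \<inter> \<Inter>F \<noteq> {}" if F: "finite F" "F \<subseteq> Kf ` Gr" for F
    proof -
      obtain G' where G': "G' \<subseteq> Gr" "finite G'" "F = Kf ` G'"
        using finite_subset_image[OF F] by blast
      have "\<exists>x. \<forall>g\<in>insert (a0, p0) G'. inner (x - fst g) (x + snd g) \<le> 0"
        using G' g0 by (intro finite_mono_ext) (auto intro: mono)
      then obtain x where "\<forall>g\<in>insert (a0, p0) G'. inner (x - fst g) (x + snd g) \<le> 0" by blast
      then have "x \<in> Kf (a0, p0) \<inter> \<Inter>F" unfolding G'(3) Kf_def by auto
      thus ?thesis by blast
    qed
  qed
  then obtain x where x: "x \<in> Kf (a0, p0)" "\<And>g. g \<in> Gr \<Longrightarrow> x \<in> Kf g" by blast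
  have "\<forall>y v. v \<in> M y \<longrightarrow> inner (x - y) (- x - v) \<ge> 0"
  proof (intro allI impI)
    fix y v assume "v \<in> M y"
    then have "x \<in> Kf (y, v)" using x(2) unfolding Gr_def by auto
    then have "inner (x - y) (x + v) \<le> 0" unfolding Kf_def by simp
    moreover have "inner (x - y) (- x - v) = - inner (x - y) (x + v)"
      by (simp add: inner_diff_right inner_add_right inner_minus_right)
    ultimately show "inner (x - y) (- x - v) \<ge> 0" by linarith
  qed
  then have "- x \<in> M x" using mm unfolding maximal_monotone_def by blast
  thus ?thesis by blast
qed

lemma minty:
  fixes A :: "'a::{real_inner,complete_space} \<Rightarrow> 'a set"
  assumes mm: "maximal_monotone A" and g: "\<gamma> > 0"
  shows "\<exists>x. \<exists>u\<in>A x. z = x + \<gamma> *\<^sub>R u"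
proof -
  define M where "M w = (\<lambda>u. \<gamma> *\<^sub>R u - z) ` A w" for w
  have monoA: "inner (x - y) (u - v) \<ge> 0" if "u \<in> A x" "v \<in> A y" for x y u v
    using mm that unfolding maximal_monotone_def monotone_op_def by blast
  have "maximal_monotone M"
    unfolding maximal_monotone_def monotone_op_def
  proof (intro conjI allI impI)
    fix x y u' v' assume "u' \<in> M x" "v' \<in> M y"
    then obtain u v where uv: "u \<in> A x" "v \<in> A y" "u' = \<gamma> *\<^sub>R u - z" "v' = \<gamma> *\<^sub>R v - z"
      unfolding M_def by auto
    have "inner (x - y) (u' - v') = \<gamma> * inner (x - y) (u - v)"
      unfolding uv by (simp add: inner_diff_right right_diff_distrib)
    thus "inner (x - y) (u' - v') \<ge> 0" using monoA[OF uv(1,2)] g by simp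
  next
    fix x u' assume H: "\<forall>y v'. v' \<in> M y \<longrightarrow> 0 \<le> inner (x - y) (u' - v')"
    define u where "u = (1/\<gamma>) *\<^sub>R (u' + z)"
    have "\<forall>y v. v \<in> A y \<longrightarrow> inner (x - y) (u - v) \<ge> 0"
    proof (intro allI impI)
      fix y v assume "v \<in> A y"
      then have "\<gamma> *\<^sub>R v - z \<in> M y" unfolding M_def by auto
      then have "0 \<le> inner (x - y) (u' - (\<gamma> *\<^sub>R v - z))" using H by blast
      moreover have "u' - (\<gamma> *\<^sub>R v - z) = \<gamma> *\<^sub>R (u - v)"
        unfolding u_def using g by (simp add: algebra_simps)
      ultimately have "0 \<le> \<gamma> * inner (x - y) (u - v)" by simp
      thus "inner (x - y) (u - v) \<ge> 0" using g by (simp add: zero_le_mult_iff)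
    qed
    then have "u \<in> A x" using mm unfolding maximal_monotone_def by blast
    moreover have "u' = \<gamma> *\<^sub>R u - z" unfolding u_def using g by simp
    ultimately show "u' \<in> M x" unfolding M_def by blast
  qed
  from minty0[OF this] obtain x where "- x \<in> M x" by blast
  then obtain u where "u \<in> A x" "- x = \<gamma> *\<^sub>R u - z" unfolding M_def by auto
  then have "z = x + \<gamma> *\<^sub>R u" by (simp add: algebra_simps)
  thus ?thesis using \<open>u \<in> A x\<close> by blast
qed

lemma resolvent_eq:
  fixes A :: "'a::real_inner \<Rightarrow> 'a set"
  assumes mm: "maximal_monotone A" and g: "\<gamma> > 0" and u: "u \<in> A x" and z: "z = x + \<gamma> *\<^sub>R u"
  shows "resolvent \<gamma> A z = x"
  unfolding resolvent_def
proof (rule the_equality)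
  show "\<exists>u\<in>A x. z = x + \<gamma> *\<^sub>R u" using u z by blast
  fix x' assume "\<exists>u\<in>A x'. z = x' + \<gamma> *\<^sub>R u"
  then obtain u' where u': "u' \<in> A x'" "z = x' + \<gamma> *\<^sub>R u'" by blast
  have mono: "inner (x' - x) (u' - u) \<ge> 0"
    using mm u u' unfolding maximal_monotone_def monotone_op_def by blast
  have "x' - x = \<gamma> *\<^sub>R (u - u')" using z u'(2) by (simp add: algebra_simps)
  then have "inner (x' - x) (x' - x) = - \<gamma> * inner (x' - x) (u' - u)"
    by (metis (no_types, lifting) inner_scaleR_right inner_commute minus_diff_eq inner_minus_right mult_minus_left)
  then have "inner (x' - x) (x' - x) \<le> 0" using mono g
    by (simp add: mult_nonneg_nonneg)
  then have "\<not> (0 < inner (x' - x) (x' - x))" by linarith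
  then have "x' - x = 0" using inner_gt_zero_iff by blast
  then show "x' = x" by simp
qed

lemma resolvent_in:
  fixes A :: "'a::{real_inner,complete_space} \<Rightarrow> 'a set"
  assumes mm: "maximal_monotone A" and g: "\<gamma> > 0"
  shows "\<exists>u\<in>A (resolvent \<gamma> A z). z = resolvent \<gamma> A z + \<gamma> *\<^sub>R u"
proof -
  obtain x u where "u \<in> A x" "z = x + \<gamma> *\<^sub>R u" using minty[OF mm g] by blast
  moreover have "resolvent \<gamma> A z = x" using resolvent_eq[OF mm g calculation] .
  ultimately show ?thesis by auto
qed

lemma subspace_closure_rv:
  fixes S :: "'a::real_normed_vector set"
  assumes "subspace S"
  shows "subspace (closure S)"
  unfolding subspace_def
proof (intro conjI ballI allI)
  show "0 \<in> closure S" using assms subspace_0 closure_subset by blast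
next
  fix x y assume x: "x \<in> closure S" and y: "y \<in> closure S"
  obtain xs where xs: "\<And>n. xs n \<in> S" "xs \<longlonglongrightarrow> x" using x closure_sequential by metis
  obtain ys where ys: "\<And>n. ys n \<in> S" "ys \<longlonglongrightarrow> y" using y closure_sequential by metis
  have "\<forall>n. xs n + ys n \<in> S" using assms xs(1) ys(1) subspace_add by blast
  moreover have "(\<lambda>n. xs n + ys n) \<longlonglongrightarrow> x + y" by (intro tendsto_intros xs ys)
  ultimately have "\<exists>zs. (\<forall>n. zs n \<in> S) \<and> zs \<longlonglongrightarrow> x + y" by (intro exI[of _ "\<lambda>n. xs n + ys n"]) simp
  then show "x + y \<in> closure S" unfolding closure_sequential by simp
next
  fix c :: real and x assume x: "x \<in> closure S"
  obtain xs where xs: "\<And>n. xs n \<in> S" "xs \<longlonglongrightarrow> x" using x closure_sequential by metis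
  have "\<forall>n. c *\<^sub>R xs n \<in> S" using assms xs(1) subspace_scale by blast
  moreover have "(\<lambda>n. c *\<^sub>R xs n) \<longlonglongrightarrow> c *\<^sub>R x" by (intro tendsto_intros xs)
  ultimately have "\<exists>zs. (\<forall>n. zs n \<in> S) \<and> zs \<longlonglongrightarrow> c *\<^sub>R x" by (intro exI[of _ "\<lambda>n. c *\<^sub>R xs n"]) simp
  then show "c *\<^sub>R x \<in> closure S" unfolding closure_sequential by simp
qed

lemma orth_decomp:
  fixes N :: "'a::{real_inner,complete_space} set"
  assumes sub: "subspace N" and cl: "closed N"
  shows "\<exists>v\<in>N. \<forall>u\<in>N. inner (w - v) u = 0"
proof -
  define S where "S = (+) w ` N"
  have c1: "closed S" unfolding S_def using cl by (rule closed_translation)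
  have c2: "convex S" unfolding S_def using subspace_imp_convex[OF sub] by (rule convex_translation)
  have c3: "S \<noteq> {}" unfolding S_def using subspace_0[OF sub] by auto
  from min_norm_exists[OF c1 c2 c3] obtain e where e1: "e \<in> S" and e2: "\<forall>y\<in>S. norm e \<le> norm y"
    by blast
  have e: "e \<in> S" "\<And>y. y \<in> S \<Longrightarrow> norm e \<le> norm y" using e1 e2 by auto
  then obtain v1 where v1: "v1 \<in> N" "e = w + v1" unfolding S_def by auto
  have "- v1 \<in> N" using sub v1(1) by (simp add: subspace_neg)
  moreover have "inner (w - (- v1)) u = 0" if u: "u \<in> N" for u
  proof (rule ccontr)
    assume ne: "inner (w - - v1) u \<noteq> 0"
    then have ne': "inner e u \<noteq> 0" using v1 by simp
    then have "u \<noteq> 0" by auto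
    then have uu: "inner u u > 0" by simp
    define t where "t = inner e u / inner u u"
    have "e - t *\<^sub>R u = w + (v1 - t *\<^sub>R u)" using v1 by simp
    moreover have "v1 - t *\<^sub>R u \<in> N" using sub v1(1) u by (simp add: subspace_diff subspace_scale)
    ultimately have "e - t *\<^sub>R u \<in> S" unfolding S_def by auto
    then have "norm e \<le> norm (e - t *\<^sub>R u)" using e(2) by blast
    then have "(norm e)\<^sup>2 \<le> (norm (e - t *\<^sub>R u))\<^sup>2" by (rule power_mono) simp
    also have "\<dots> = (norm e)\<^sup>2 - 2 * t * inner e u + t * (t * (norm u)\<^sup>2)" by (rule norm_sub_scale_sq)
    also have "t * (t * (norm u)\<^sup>2) = t * inner e u"
      unfolding t_def power2_norm_eq_inner using uu by simp
    finally have "t * inner e u \<le> 0" by simp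
    moreover have "t * inner e u = (inner e u)\<^sup>2 / inner u u" unfolding t_def by (simp add: power2_eq_square)
    moreover have "(inner e u)\<^sup>2 / inner u u > 0" using ne' uu by simp
    ultimately show False by linarith
  qed
  ultimately show ?thesis by blast
qed

lemma riesz:
  fixes f :: "'a::{real_inner,complete_space} \<Rightarrow> real"
  assumes bl: "bounded_linear f"
  shows "\<exists>l. \<forall>x. f x = inner l x"
proof (cases "\<forall>x. f x = 0")
  case True thus ?thesis by (intro exI[of _ 0]) simp
next
  case False
  then obtain w0 where w0: "f w0 \<noteq> 0" by blast
  interpret f: bounded_linear f by (rule bl)
  define N where "N = {x. f x = 0}"
  have sub: "subspace N" unfolding N_def subspace_def by (simp add: f.add f.scale f.zero)
  have cl: "closed N" unfolding N_def
    by (intro closed_Collect_eq linear_continuous_on bl continuous_on_const)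
  obtain v where v: "v \<in> N" "\<And>u. u \<in> N \<Longrightarrow> inner (w0 - v) u = 0" using orth_decomp[OF sub cl, of w0] by blast
  define e where "e = w0 - v"
  have fe: "f e = f w0" unfolding e_def using v(1) unfolding N_def by (simp add: f.diff)
  have ee: "inner e e \<noteq> 0"
  proof
    assume "inner e e = 0"
    then have "e = 0" by simp
    then show False using fe w0 f.zero by simp
  qed
  define l where "l = (f e / inner e e) *\<^sub>R e"
  have "f x = inner l x" for x
  proof -
    have "x - (f x / f e) *\<^sub>R e \<in> N" unfolding N_def using fe w0 by (simp add: f.diff f.scale)
    then have "inner e (x - (f x / f e) *\<^sub>R e) = 0" using v(2) unfolding e_def by blast
    then have "inner e x = (f x / f e) * inner e e" by (simp add: inner_diff_right)
    then show ?thesis unfolding l_def using fe w0 ee by (simp add: inner_commute)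
  qed
  thus ?thesis by blast
qed

lemma weak_subseq_principle:
  assumes "\<And>r::nat\<Rightarrow>nat. strict_mono r \<Longrightarrow> \<exists>r'::nat\<Rightarrow>nat. strict_mono r' \<and> weakly_converges (s \<circ> r \<circ> r') l"
  shows "weakly_converges s l"
  unfolding weakly_converges_def
proof (rule allI, rule ccontr)
  fix w assume nc: "\<not> ((\<lambda>n. inner (s n) w) \<longlongrightarrow> inner l w) sequentially"
  then obtain e where e: "e > 0" "\<forall>N. \<exists>n\<ge>N. \<not> dist (inner (s n) w) (inner l w) < e"
    unfolding LIMSEQ_def by blast
  define S where "S = {n. \<not> dist (inner (s n) w) (inner l w) < e}"
  have "infinite S" unfolding S_def infinite_nat_iff_unbounded_le using e(2) by blast
  from infinite_enumerate[OF this] obtain r :: "nat \<Rightarrow> nat" where r1: "strict_mono r" and r2: "\<forall>n. r n \<in> S" by blast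
  have r: "strict_mono r" "\<And>n. r n \<in> S" using r1 r2 by auto
  obtain r' where r': "strict_mono r'" "weakly_converges (s \<circ> r \<circ> r') l" using assms[OF r(1)] by blast
  then have "((\<lambda>k. inner ((s \<circ> r \<circ> r') k) w) \<longlongrightarrow> inner l w) sequentially"
    unfolding weakly_converges_def by blast
  then obtain k0 where "\<forall>k\<ge>k0. dist (inner ((s \<circ> r \<circ> r') k) w) (inner l w) < e"
    unfolding LIMSEQ_def using e(1) by blast
  then have "dist (inner (s (r (r' k0))) w) (inner l w) < e" by simp
  moreover have "r (r' k0) \<in> S" by (rule r(2))
  ultimately show False unfolding S_def by simp
qed

lemma weak_unique:
  assumes "weakly_converges s l1" "weakly_converges s l2"
  shows "l1 = l2"
proof -
  have "((\<lambda>n. inner (s n) (l1 - l2)) \<longlongrightarrow> inner l1 (l1 - l2)) sequentially"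
       "((\<lambda>n. inner (s n) (l1 - l2)) \<longlongrightarrow> inner l2 (l1 - l2)) sequentially"
    using assms unfolding weakly_converges_def by blast+
  then have "inner l1 (l1 - l2) = inner l2 (l1 - l2)" by (rule LIMSEQ_unique)
  then have "inner (l1 - l2) (l1 - l2) = 0" by (simp add: inner_diff_left)
  thus ?thesis by simp
qed

lemma weak_add:
  assumes "weakly_converges s a" "weakly_converges t b"
  shows "weakly_converges (\<lambda>n. s n + t n) (a + b)"
  using assms unfolding weakly_converges_def by (auto simp: inner_add_left intro: tendsto_add)

lemma weak_scale:
  assumes "weakly_converges s a"
  shows "weakly_converges (\<lambda>n. c *\<^sub>R s n) (c *\<^sub>R a)"
  using assms unfolding weakly_converges_def by (auto intro: tendsto_mult_left)

lemma strong_imp_weak: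
  assumes "s \<longlonglongrightarrow> l"
  shows "weakly_converges s l"
  unfolding weakly_converges_def using assms by (auto intro: tendsto_inner tendsto_const)

lemma weak_subseq:
  assumes "weakly_converges s l" "strict_mono r"
  shows "weakly_converges (s \<circ> r) l"
  unfolding weakly_converges_def
proof
  fix w
  have "((\<lambda>n. inner (s n) w) \<longlongrightarrow> inner l w) sequentially" using assms(1) unfolding weakly_converges_def by blast
  from LIMSEQ_subseq_LIMSEQ[OF this assms(2)] show "((\<lambda>n. inner ((s \<circ> r) n) w) \<longlongrightarrow> inner l w) sequentially"
    by (simp add: o_def)
qed

lemma weak_plus_null:
  assumes "weakly_converges s l" "(\<lambda>n. t n - s n) \<longlonglongrightarrow> 0"
  shows "weakly_converges t l"
proof -
  have "weakly_converges (\<lambda>n. s n + (t n - s n)) (l + 0)"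
    by (intro weak_add assms strong_imp_weak)
  thus ?thesis by simp
qed

lemma diag_inner_convergent:
  fixes s :: "nat \<Rightarrow> 'a::real_inner"
  assumes M: "\<And>n. norm (s n) \<le> M"
  shows "\<exists>r::nat\<Rightarrow>nat. strict_mono r \<and> (\<forall>m. convergent (\<lambda>k. inner (s (r k)) (s m)))"
proof -
  define P where "P = (\<lambda>(m::nat) (\<sigma>::nat\<Rightarrow>nat). convergent (\<lambda>k. inner (s (\<sigma> k)) (s m)))"
  have ex: "\<exists>r'. strict_mono r' \<and> P m (\<sigma> \<circ> r')" if "strict_mono (\<sigma>::nat\<Rightarrow>nat)" for m \<sigma>
  proof -
    define t where "t k = inner (s (\<sigma> k)) (s m)" for k
    obtain f where f: "strict_mono f" "monoseq (\<lambda>n. t (f n))" using seq_monosub[of t] by blast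
    have "norm (t (f n)) \<le> M * M" for n
    proof -
      have "norm (t (f n)) \<le> norm (s (\<sigma> (f n))) * norm (s m)" unfolding t_def real_norm_def
        by (rule Cauchy_Schwarz_ineq2)
      also have "\<dots> \<le> M * M" using M by (intro mult_mono) (auto intro: order_trans[OF norm_ge_zero M])
      finally show ?thesis .
    qed
    then have "Bseq (\<lambda>n. t (f n))" by (intro BseqI')
    then have "convergent (\<lambda>n. t (f n))" using f(2) by (rule Bseq_monoseq_convergent)
    then have "P m (\<sigma> \<circ> f)" unfolding P_def t_def by (simp add: o_def)
    thus ?thesis using f(1) by blast
  qed
  interpret D: subseqs P using ex by unfold_locales
  have stab: "P n (\<sigma> \<circ> r)" if "strict_mono r" "P n \<sigma>" for r \<sigma> n
    using convergent_subseq_convergent[OF that(2)[unfolded P_def] that(1)] unfolding P_def by (simp add: o_def)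
  have "convergent (\<lambda>k. inner (s (D.diagseq k)) (s m))" for m
  proof -
    have "P m (D.diagseq \<circ> (+) (Suc m))" using D.diagseq_holds[of m] stab by blast
    then have "convergent (\<lambda>k. inner (s (D.diagseq (k + Suc m))) (s m))" unfolding P_def by (simp add: o_def add.commute)
    then show ?thesis by (rule convergent_ignore_initial_segment[THEN iffD1])
  qed
  thus ?thesis using D.subseq_diagseq by blast
qed

lemma weak_seq_compact:
  fixes s :: "nat \<Rightarrow> 'a::{real_inner,complete_space}"
  assumes M: "\<And>n. norm (s n) \<le> M"
  shows "\<exists>r::nat\<Rightarrow>nat. \<exists>l. strict_mono r \<and> weakly_converges (s \<circ> r) l"
proof -
  obtain r :: "nat \<Rightarrow> nat" where r: "strict_mono r" "\<And>m. convergent (\<lambda>k. inner (s (r k)) (s m))"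
    using diag_inner_convergent[of s M, OF M] by blast
  define t where "t = s \<circ> r"
  have tM: "norm (t k) \<le> M" for k unfolding t_def using M by simp
  have M0: "0 \<le> M" using order_trans[OF norm_ge_zero M] .
  define Cv where "Cv w = convergent (\<lambda>k. inner (t k) w)" for w
  have span: "Cv w" if "w \<in> span (range s)" for w
    using that
  proof (induction rule: span_induct)
    case base
    show ?case unfolding subspace_def
    proof (intro conjI ballI allI)
      show "0 \<in> Collect Cv" unfolding Cv_def by (simp add: convergent_const)
    next
      fix x y assume "x \<in> Collect Cv" "y \<in> Collect Cv"
      then show "x + y \<in> Collect Cv" unfolding Cv_def by (simp add: inner_add_right convergent_add)
    next
      fix c :: real and x assume "x \<in> Collect Cv"
      then obtain a where "(\<lambda>k. inner (t k) x) \<longlonglongrightarrow> a" unfolding convergent_def Cv_def by blast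
      then have "(\<lambda>k. c * inner (t k) x) \<longlonglongrightarrow> c * a" by (intro tendsto_intros)
      then show "c *\<^sub>R x \<in> Collect Cv" unfolding convergent_def Cv_def by auto
    qed
  next
    case (step x)
    then obtain m where "x = s m" by blast
    then show ?case unfolding Cv_def t_def using r(2) by (simp add: o_def)
  qed
  define V where "V = closure (span (range s))"
  have Vsub: "subspace V" unfolding V_def by (intro subspace_closure_rv subspace_span)
  have Vcl: "closed V" unfolding V_def by simp
  have tV: "t k \<in> V" for k unfolding V_def t_def using span_base[of "s (r k)" "range s"] closure_subset by auto
  have clos: "Cv w" if wV: "w \<in> V" for w
  proof -
    have "Cauchy (\<lambda>k. inner (t k) w)"
    proof (rule CauchyI)
      fix e :: real assume e: "e > 0"
      define d where "d = e / (4 * (M + 1))"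
      have d: "d > 0" unfolding d_def using e M0 by simp
      obtain v where v: "v \<in> span (range s)" "dist v w < d"
        using wV d unfolding V_def closure_approachable by blast
      have "Cauchy (\<lambda>k. inner (t k) v)" using span[OF v(1)] unfolding Cv_def by (rule convergent_Cauchy)
      then obtain N where N: "\<And>m n. m \<ge> N \<Longrightarrow> n \<ge> N \<Longrightarrow> norm (inner (t m) v - inner (t n) v) < e / 2"
        using CauchyD[of _ "e/2"] e by (metis half_gt_zero)
      have "norm (inner (t m) w - inner (t n) w) < e" if "m \<ge> N" "n \<ge> N" for m n
      proof -
        have eq: "inner (t m) w - inner (t n) w = (inner (t m) v - inner (t n) v) + inner (t m - t n) (w - v)"
          by (simp add: inner_diff_left inner_diff_right)
        have "\<bar>inner (t m - t n) (w - v)\<bar> \<le> norm (t m - t n) * norm (w - v)" by (rule Cauchy_Schwarz_ineq2)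
        also have "\<dots> \<le> (2 * M) * d"
        proof (rule mult_mono)
          show "norm (t m - t n) \<le> 2 * M" using norm_triangle_ineq4[of "t m" "t n"] tM[of m] tM[of n] by linarith
          show "norm (w - v) \<le> d" using v(2) by (simp add: dist_norm norm_minus_commute)
        qed (use M0 in auto)
        also have "\<dots> < e / 2"
        proof -
          have "(2 * M) * d = e * (2 * M) / (4 * (M + 1))" unfolding d_def by simp
          also have "\<dots> < e * (2 * (M + 1)) / (4 * (M + 1))" using e M0 by (intro divide_strict_right_mono) auto
          also have "\<dots> = e / 2"
          proof -
            have "4 * (M + 1) \<noteq> 0" using M0 by simp
            then show ?thesis by (simp add: field_simps)
          qed
          finally show ?thesis .
        qed
        finally have "\<bar>inner (t m - t n) (w - v)\<bar> < e / 2" .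
        moreover have "\<bar>inner (t m) v - inner (t n) v\<bar> < e / 2" using N[OF that] by simp
        ultimately show ?thesis unfolding eq real_norm_def by linarith
      qed
      then show "\<exists>M. \<forall>m\<ge>M. \<forall>n\<ge>M. norm (inner (t m) w - inner (t n) w) < e" by blast
    qed
    then show ?thesis unfolding Cv_def by (simp add: Cauchy_convergent_iff)
  qed
  have all: "Cv w" for w
  proof -
    obtain v where v: "v \<in> V" "\<And>u. u \<in> V \<Longrightarrow> inner (w - v) u = 0" using orth_decomp[OF Vsub Vcl, of w] by blast
    have "inner (t k) w = inner (t k) v" for k
    proof -
      have "inner (w - v) (t k) = 0" using v(2) tV by blast
      then have "inner w (t k) - inner v (t k) = 0" by (simp add: inner_diff_left)
      then show ?thesis by (simp add: inner_commute)
    qed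
    then show ?thesis using clos[OF v(1)] unfolding Cv_def by simp
  qed
  define f where "f w = lim (\<lambda>k. inner (t k) w)" for w
  have fl: "(\<lambda>k. inner (t k) w) \<longlonglongrightarrow> f w" for w using all[of w] unfolding Cv_def f_def convergent_LIMSEQ_iff .
  have "bounded_linear f"
  proof (rule bounded_linear_intro)
    fix x y
    have "(\<lambda>k. inner (t k) x + inner (t k) y) \<longlonglongrightarrow> f x + f y" by (intro tendsto_intros fl)
    moreover have "(\<lambda>k. inner (t k) x + inner (t k) y) \<longlonglongrightarrow> f (x + y)" using fl[of "x + y"] by (simp add: inner_add_right)
    ultimately show "f (x + y) = f x + f y" by (rule LIMSEQ_unique[rotated])
  next
    fix c :: real and x
    have "(\<lambda>k. c * inner (t k) x) \<longlonglongrightarrow> c * f x" by (intro tendsto_intros fl)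
    moreover have "(\<lambda>k. c * inner (t k) x) \<longlonglongrightarrow> f (c *\<^sub>R x)" using fl[of "c *\<^sub>R x"] by simp
    ultimately show "f (c *\<^sub>R x) = c *\<^sub>R f x" using LIMSEQ_unique by fastforce
  next
    fix x
    have "(\<lambda>k. \<bar>inner (t k) x\<bar>) \<longlonglongrightarrow> \<bar>f x\<bar>" by (intro tendsto_intros fl)
    moreover have "\<forall>k. \<bar>inner (t k) x\<bar> \<le> norm x * M"
    proof
      fix k
      have "\<bar>inner (t k) x\<bar> \<le> norm (t k) * norm x" by (rule Cauchy_Schwarz_ineq2)
      also have "\<dots> \<le> M * norm x" using tM by (intro mult_right_mono) auto
      finally show "\<bar>inner (t k) x\<bar> \<le> norm x * M" by (simp add: mult.commute)
    qed
    ultimately have "\<bar>f x\<bar> \<le> norm x * M" by (intro LIMSEQ_le_const2) auto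
    then show "norm (f x) \<le> norm x * M" by simp
  qed
  then obtain l where l: "\<And>x. f x = inner l x" using riesz by blast
  have "weakly_converges t l" unfolding weakly_converges_def using fl l by simp
  thus ?thesis using r(1) unfolding t_def by blast
qed

lemma inner_null_bounded:
  fixes a b :: "nat \<Rightarrow> 'a::real_inner"
  assumes "a \<longlonglongrightarrow> 0" "\<And>k. norm (b k) \<le> M"
  shows "(\<lambda>k. inner (a k) (b k)) \<longlonglongrightarrow> 0"
proof (rule Lim_null_comparison)
  show "\<forall>\<^sub>F k in sequentially. norm (inner (a k) (b k)) \<le> norm (a k) * M"
  proof (rule always_eventually, rule allI)
    fix k
    have "norm (inner (a k) (b k)) \<le> norm (a k) * norm (b k)" unfolding real_norm_def by (rule Cauchy_Schwarz_ineq2)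
    also have "\<dots> \<le> norm (a k) * M" using assms(2) by (intro mult_left_mono) auto
    finally show "norm (inner (a k) (b k)) \<le> norm (a k) * M" .
  qed
  have "(\<lambda>k. norm (a k)) \<longlonglongrightarrow> 0" by (rule tendsto_norm_zero[OF assms(1)])
  then show "(\<lambda>k. norm (a k) * M) \<longlonglongrightarrow> 0" by (rule tendsto_mult_left_zero)
qed

lemma limit_ident:
  fixes A1 A2 :: "'a::{real_inner,complete_space} \<Rightarrow> 'a set" and D :: "'a \<Rightarrow> 'a"
  assumes mm1: "maximal_monotone A1" and mm2: "maximal_monotone A2"
    and Dmono: "monotone_fun D" and DL: "\<And>x y. norm (D x - D y) \<le> K * norm (x - y)" and K0: "K \<ge> 0"
    and U: "\<And>k. U k \<in> A1 (X k)" and V: "\<And>k. V k - D (Y k) \<in> A2 (Y k)"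
    and XY: "(\<lambda>k. X k - Y k) \<longlonglongrightarrow> 0" and UV: "(\<lambda>k. U k + V k) \<longlonglongrightarrow> 0"
    and bU: "\<And>k. norm (U k) \<le> MU" and bY: "\<And>k. norm (Y k) \<le> MY"
    and wX: "weakly_converges X xs" and wU: "weakly_converges U us"
  shows "us \<in> A1 xs \<and> - us - D xs \<in> A2 xs"
proof -
  have mono1: "inner (x - y) (u - v) \<ge> 0" if "u \<in> A1 x" "v \<in> A1 y" for x y u v
    using mm1 that unfolding maximal_monotone_def monotone_op_def by blast
  have mono2: "inner (x - y) (u - v) \<ge> 0" if "u \<in> A2 x" "v \<in> A2 y" for x y u v
    using mm2 that unfolding maximal_monotone_def monotone_op_def by blast
  have wY: "weakly_converges Y xs"
  proof (rule weak_plus_null[OF wX])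
    have "(\<lambda>k. - (X k - Y k)) \<longlonglongrightarrow> - 0" by (intro tendsto_intros XY)
    then show "(\<lambda>k. Y k - X k) \<longlonglongrightarrow> 0" by simp
  qed
  have wV: "weakly_converges V (- us)"
  proof (rule weak_plus_null)
    show "weakly_converges (\<lambda>k. (-1) *\<^sub>R U k) (- us)" using weak_scale[OF wU, of "-1"] by simp
    show "(\<lambda>k. V k - (-1) *\<^sub>R U k) \<longlonglongrightarrow> 0" using UV by (simp add: add.commute)
  qed
  have key: "inner (xs - p) (us - ap) + inner (xs - q) (- us - bq - D q) \<ge> 0"
    if p: "ap \<in> A1 p" and q: "bq \<in> A2 q" for p ap q bq
  proof -
    define wq where "wq = bq + D q"
    define S where "S k = inner (X k - p) (U k - ap) + inner (Y k - q) (V k - wq)" for k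
    have S0: "S k \<ge> 0" for k
    proof -
      have "inner (X k - p) (U k - ap) \<ge> 0" using mono1[OF U p] .
      moreover have "inner (Y k - q) ((V k - D (Y k)) - bq) \<ge> 0" using mono2[OF V q] .
      moreover have "inner (Y k - q) (D (Y k) - D q) \<ge> 0" using Dmono unfolding monotone_fun_def by blast
      moreover have "inner (Y k - q) (V k - wq) = inner (Y k - q) ((V k - D (Y k)) - bq) + inner (Y k - q) (D (Y k) - D q)"
        unfolding wq_def by (simp add: inner_diff_right inner_add_right)
      ultimately show ?thesis unfolding S_def by linarith
    qed
    define T where "T k = inner (X k) (U k) + inner (Y k) (V k)" for k
    have Seq: "S k = T k - inner (X k) ap - inner p (U k) + inner p ap - inner (Y k) wq - inner q (V k) + inner q wq" for k
      unfolding S_def T_def inner_diff_left inner_diff_right by linarith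
    have Teq: "T k = inner (X k - Y k) (U k) + inner (U k + V k) (Y k)" for k
      unfolding T_def inner_diff_left inner_add_left by (simp add: inner_commute[of "U k" "Y k"] inner_commute[of "V k" "Y k"])
    have T0: "T \<longlonglongrightarrow> 0"
    proof -
      have "(\<lambda>k. inner (X k - Y k) (U k)) \<longlonglongrightarrow> 0" using XY bU by (rule inner_null_bounded)
      moreover have "(\<lambda>k. inner (U k + V k) (Y k)) \<longlonglongrightarrow> 0" using UV bY by (rule inner_null_bounded)
      ultimately have "(\<lambda>k. inner (X k - Y k) (U k) + inner (U k + V k) (Y k)) \<longlonglongrightarrow> 0 + 0" by (rule tendsto_add)
      then show ?thesis unfolding Teq by simp
    qed
    have l1: "(\<lambda>k. inner (X k) ap) \<longlonglongrightarrow> inner xs ap" using wX unfolding weakly_converges_def by blast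
    have l2: "(\<lambda>k. inner p (U k)) \<longlonglongrightarrow> inner p us" using wU unfolding weakly_converges_def by (simp add: inner_commute[of p])
    have l3: "(\<lambda>k. inner (Y k) wq) \<longlonglongrightarrow> inner xs wq" using wY unfolding weakly_converges_def by blast
    have l4: "(\<lambda>k. inner q (V k)) \<longlonglongrightarrow> inner q (- us)" using wV unfolding weakly_converges_def by (simp add: inner_commute[of q])
    have "S \<longlonglongrightarrow> 0 - inner xs ap - inner p us + inner p ap - inner xs wq - inner q (- us) + inner q wq"
      unfolding Seq by (intro tendsto_intros T0 l1 l2 l3 l4)
    then have "0 - inner xs ap - inner p us + inner p ap - inner xs wq - inner q (- us) + inner q wq \<ge> 0"
      using S0 by (intro LIMSEQ_le_const) auto
    moreover have "inner (xs - p) (us - ap) + inner (xs - q) (- us - bq - D q) = 0 - inner xs ap - inner p us + inner p ap - inner xs wq - inner q (- us) + inner q wq"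
    proof -
      have e: "- us - bq - D q = - us - wq" unfolding wq_def by (simp add: algebra_simps)
      show ?thesis unfolding e inner_diff_left inner_diff_right inner_minus_right inner_minus_left by simp
    qed
    ultimately show ?thesis by linarith
  qed
  define t where "t = 1 / (K + 1)"
  have t0: "t > 0" unfolding t_def using K0 by simp
  have tK: "t * K < 1" unfolding t_def using K0 by (simp add: field_simps)
  define cs where "cs = - us - D xs"
  obtain p ap where p: "ap \<in> A1 p" "xs + t *\<^sub>R us = p + t *\<^sub>R ap" using minty[OF mm1 t0] by blast
  obtain q bq where q: "bq \<in> A2 q" "xs + t *\<^sub>R cs = q + t *\<^sub>R bq" using minty[OF mm2 t0] by blast
  have xp: "xs - p = t *\<^sub>R (ap - us)" using p(2) by (simp add: algebra_simps)
  have xq: "xs - q = t *\<^sub>R (bq - cs)" using q(2) by (simp add: algebra_simps)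
  have k: "inner (xs - p) (us - ap) + inner (xs - q) (- us - bq - D q) \<ge> 0" by (rule key[OF p(1) q(1)])
  define a where "a = inner (ap - us) (ap - us)"
  define b where "b = inner (bq - cs) (bq - cs)"
  have e1: "inner (xs - p) (us - ap) = - (t * a)"
  proof -
    have "us - ap = - (ap - us)" by simp
    then show ?thesis unfolding xp a_def by (simp only: inner_minus_right inner_scaleR_left)
  qed
  have e2: "inner (xs - q) (- us - bq - D q) = - (t * b) + inner (xs - q) (D xs - D q)"
  proof -
    have "- us - bq - D q = - (bq - cs) + (D xs - D q)" unfolding cs_def by (simp add: algebra_simps)
    then have "inner (xs - q) (- us - bq - D q) = - inner (xs - q) (bq - cs) + inner (xs - q) (D xs - D q)"
      by (simp only: inner_add_right inner_minus_right)
    moreover have "inner (xs - q) (bq - cs) = t * b" unfolding xq b_def by (simp only: inner_scaleR_left)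
    ultimately show ?thesis by simp
  qed
  have nq: "norm (xs - q) = t * norm (bq - cs)" unfolding xq using t0 by simp
  have "inner (xs - q) (D xs - D q) \<le> norm (xs - q) * norm (D xs - D q)"
    using Cauchy_Schwarz_ineq2[of "xs - q" "D xs - D q"] by linarith
  also have "\<dots> \<le> norm (xs - q) * (K * norm (xs - q))" using DL[of xs q] norm_ge_zero[of "xs - q"] by (rule mult_left_mono)
  also have "\<dots> = K * (t * t) * (norm (bq - cs))\<^sup>2" unfolding nq by (simp add: power2_eq_square)
  also have "(norm (bq - cs))\<^sup>2 = b" unfolding b_def by (rule power2_norm_eq_inner)
  finally have e3: "inner (xs - q) (D xs - D q) \<le> K * (t * t) * b" .
  have n1: "a \<ge> 0" "b \<ge> 0" unfolding a_def b_def by simp_all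
  have sum: "t * a + (t * b - K * (t * t) * b) \<le> 0" using k e1 e2 e3 by linarith
  have hb: "t * b - K * (t * t) * b = (t * (1 - t * K)) * b" by (simp add: algebra_simps)
  have c2: "t * (1 - t * K) > 0" using t0 tK by simp
  have ta: "t * a \<ge> 0" using t0 n1 by simp
  have tb: "(t * (1 - t * K)) * b \<ge> 0" using c2 n1 by simp
  have "t * a = 0" "(t * (1 - t * K)) * b = 0" using sum hb ta tb by linarith+
  then have a0: "a = 0" and b0: "b = 0" using t0 c2 tK by auto
  have "ap - us = 0" using a0 unfolding a_def by simp
  then have apus: "ap = us" by simp
  have "bq - cs = 0" using b0 unfolding b_def by simp
  then have bqcs: "bq = cs" by simp
  have "xs - p = 0" using xp apus by simp
  then have pxs: "p = xs" by simp
  have "xs - q = 0" using xq bqcs by simp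
  then have qxs: "q = xs" by simp
  have "us \<in> A1 xs" using p(1) apus pxs by simp
  moreover have "cs \<in> A2 xs" using q(1) bqcs qxs by simp
  ultimately show ?thesis unfolding cs_def by simp
qed

lemma uvw_identity:
  fixes u v w :: "'a::real_inner"
  shows "inner u (w - u) + inner v (2 *\<^sub>R u - v - w) = - inner (v - u) (w + v - u)"
  by (simp add: inner_diff_left inner_diff_right inner_add_left inner_add_right inner_commute algebra_simps)

lemma norm_sub_sq:
  fixes a d :: "'a::real_inner"
  shows "(norm (a - d))\<^sup>2 = (norm a)\<^sup>2 - 2 * inner d a + (norm d)\<^sup>2"
  using norm_sub_scale_sq[of a 1 d] by (simp add: inner_commute)

lemma young_inner:
  fixes e v :: "'a::real_inner"
  assumes b: "\<beta> > 0"
  shows "inner e v \<ge> - \<beta> * (norm v)\<^sup>2 - (norm e)\<^sup>2 / (4 * \<beta>)"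
proof -
  have "0 \<le> (norm ((2 * \<beta>) *\<^sub>R v + e))\<^sup>2" by simp
  also have "\<dots> = 4 * \<beta>\<^sup>2 * (norm v)\<^sup>2 + 4 * \<beta> * inner e v + (norm e)\<^sup>2"
    unfolding power2_norm_eq_inner by (simp add: inner_add_left inner_add_right inner_commute algebra_simps power2_eq_square)
  finally have "0 \<le> 4 * \<beta>\<^sup>2 * (norm v)\<^sup>2 + 4 * \<beta> * inner e v + (norm e)\<^sup>2" .
  then have "0 \<le> (4 * \<beta>\<^sup>2 * (norm v)\<^sup>2 + 4 * \<beta> * inner e v + (norm e)\<^sup>2) / (4 * \<beta>)" using b by simp
  also have "\<dots> = \<beta> * (norm v)\<^sup>2 + inner e v + (norm e)\<^sup>2 / (4 * \<beta>)"
    using b by (simp add: field_simps power2_eq_square)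
  finally show ?thesis by linarith
qed

lemma step_ineq:
  fixes z0 z1 x1 y0 y1 ym a1 b1 xb zb ab bb :: "'a::real_inner" and B C :: "'a \<Rightarrow> 'a"
  assumes g: "\<gamma> > 0" and b: "\<beta> > 0" and L: "L \<ge> 0"
   and m1: "inner (x1 - xb) (a1 - ab) \<ge> 0"
   and m2: "inner (y1 - xb) (b1 - bb) \<ge> 0"
   and mB: "inner (y1 - xb) (B y1 - B xb) \<ge> 0"
   and cC: "inner (y0 - xb) (C y0 - C xb) \<ge> \<beta> * (norm (C y0 - C xb))\<^sup>2"
   and lB: "norm (B y0 - B ym) \<le> L * norm (y0 - ym)"
   and r1: "z0 = x1 + \<gamma> *\<^sub>R a1"
   and r2: "y1 + \<gamma> *\<^sub>R b1 = 2 *\<^sub>R x1 - z0 - (2 * \<gamma>) *\<^sub>R B y0 + \<gamma> *\<^sub>R B ym - \<gamma> *\<^sub>R C y0"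
   and r3: "z1 = z0 + y1 - x1"
   and fb: "ab + bb + B xb + C xb = 0" and fz: "zb = xb + \<gamma> *\<^sub>R ab"
  shows "(norm (z1 - zb))\<^sup>2 - 2 * \<gamma> * inner (y1 - xb) (B y1 - B y0) + \<gamma> * L * (norm (y1 - y0))\<^sup>2
     \<le> (norm (z0 - zb))\<^sup>2 - 2 * \<gamma> * inner (y0 - xb) (B y0 - B ym) + \<gamma> * L * (norm (y0 - ym))\<^sup>2
        - (norm (z1 - z0))\<^sup>2 + (\<gamma> / (2 * \<beta>) + 2 * \<gamma> * L) * (norm (y1 - y0))\<^sup>2"
proof -
  define u where "u = x1 - xb"
  define v where "v = y1 - xb"
  define w where "w = z0 - zb"
  define BC where "BC = (2 *\<^sub>R B y0 - B ym - B xb) + (C y0 - C xb)"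
  have P1: "\<gamma> *\<^sub>R (a1 - ab) = w - u" unfolding u_def w_def using r1 fz by (simp add: algebra_simps)
  have hb1: "\<gamma> *\<^sub>R b1 = 2 *\<^sub>R x1 - z0 - (2 * \<gamma>) *\<^sub>R B y0 + \<gamma> *\<^sub>R B ym - \<gamma> *\<^sub>R C y0 - y1"
    using r2 by (simp add: algebra_simps)
  have hbb: "bb = - ab - B xb - C xb"
  proof -
    have "bb = (ab + bb + B xb + C xb) - ab - B xb - C xb" by (simp add: algebra_simps)
    then show ?thesis using fb by simp
  qed
  have hgbb: "\<gamma> *\<^sub>R bb = xb - zb - \<gamma> *\<^sub>R B xb - \<gamma> *\<^sub>R C xb"
    unfolding hbb fz by (simp add: algebra_simps)
  have h2: "(2 * \<gamma>) *\<^sub>R B y0 = \<gamma> *\<^sub>R B y0 + \<gamma> *\<^sub>R B y0" by (metis scaleR_2 scaleR_scaleR)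
  have P2: "\<gamma> *\<^sub>R (b1 - bb) = 2 *\<^sub>R u - v - w - \<gamma> *\<^sub>R BC"
  proof -
    have "\<gamma> *\<^sub>R (b1 - bb) = \<gamma> *\<^sub>R b1 - \<gamma> *\<^sub>R bb" by (simp add: algebra_simps)
    also have "\<dots> = 2 *\<^sub>R u - v - w - \<gamma> *\<^sub>R BC"
      unfolding hb1 hgbb u_def v_def w_def BC_def h2 by (simp add: algebra_simps scaleR_2)
    finally show ?thesis .
  qed
  have E2: "\<gamma> * inner (x1 - xb) (a1 - ab) + \<gamma> * inner (y1 - xb) (b1 - bb) = - inner (z1 - z0) (z1 - zb) - \<gamma> * inner v BC"
  proof -
    have "\<gamma> * inner (x1 - xb) (a1 - ab) = inner u (\<gamma> *\<^sub>R (a1 - ab))" unfolding u_def by simp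
    also have "\<dots> = inner u (w - u)" unfolding P1 ..
    finally have "\<gamma> * inner (x1 - xb) (a1 - ab) = inner u (w - u)" .
    moreover have "\<gamma> * inner (y1 - xb) (b1 - bb) = inner v (2 *\<^sub>R u - v - w) - \<gamma> * inner v BC"
    proof -
      have "\<gamma> * inner (y1 - xb) (b1 - bb) = inner v (\<gamma> *\<^sub>R (b1 - bb))" unfolding v_def by simp
      also have "\<dots> = inner v (2 *\<^sub>R u - v - w) - \<gamma> * inner v BC" unfolding P2 by (simp add: inner_diff_right)
      finally show ?thesis .
    qed
    moreover have "z1 - z0 = v - u" unfolding u_def v_def using r3 by simp
    moreover have "z1 - zb = w + v - u" unfolding u_def v_def w_def using r3 by (simp add: algebra_simps)
    ultimately show ?thesis using uvw_identity[of u w v] by simp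
  qed
  have E1: "0 \<le> \<gamma> * inner (x1 - xb) (a1 - ab) + \<gamma> * inner (y1 - xb) (b1 - bb)"
    using m1 m2 g by simp
  define d where "d = z1 - z0"
  have E3: "(norm (z1 - zb))\<^sup>2 = (norm (z0 - zb))\<^sup>2 - (norm d)\<^sup>2 + 2 * inner d (z1 - zb)"
  proof -
    have e: "z0 - zb = (z1 - zb) - d" unfolding d_def by simp
    have "(norm (z0 - zb))\<^sup>2 = (norm (z1 - zb))\<^sup>2 - 2 * inner d (z1 - zb) + (norm d)\<^sup>2"
      unfolding e by (rule norm_sub_sq)
    thus ?thesis by linarith
  qed
  define cv where "cv = C y0 - C xb"
  define De where "De = y1 - y0"
  have E4: "inner v cv \<ge> - (norm De)\<^sup>2 / (4 * \<beta>)"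
  proof -
    have "inner v cv = inner (y0 - xb) cv + inner De cv" unfolding v_def De_def by (simp add: inner_diff_left)
    moreover have "inner De cv \<ge> - \<beta> * (norm cv)\<^sup>2 - (norm De)\<^sup>2 / (4 * \<beta>)" using young_inner[OF b] .
    ultimately show ?thesis using cC unfolding cv_def by linarith
  qed
  define bv where "bv = B y0 - B ym"
  have E5: "inner v (2 *\<^sub>R B y0 - B ym - B xb) = inner v (B y1 - B xb) - inner v (B y1 - B y0) + inner (y0 - xb) bv + inner De bv"
  proof -
    have "2 *\<^sub>R B y0 - B ym - B xb = (B y1 - B xb) - (B y1 - B y0) + bv" unfolding bv_def by (simp add: algebra_simps scaleR_2)
    then have "inner v (2 *\<^sub>R B y0 - B ym - B xb) = inner v (B y1 - B xb) - inner v (B y1 - B y0) + inner v bv"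
      by (simp add: inner_diff_right inner_add_right)
    moreover have "inner v bv = inner (y0 - xb) bv + inner De bv" unfolding v_def De_def by (simp add: inner_diff_left)
    ultimately show ?thesis by simp
  qed
  have E6: "\<bar>inner De bv\<bar> \<le> L / 2 * ((norm De)\<^sup>2 + (norm (y0 - ym))\<^sup>2)"
  proof -
    have "\<bar>inner De bv\<bar> \<le> norm De * norm bv" by (rule Cauchy_Schwarz_ineq2)
    also have "\<dots> \<le> norm De * (L * norm (y0 - ym))" unfolding bv_def using lB by (intro mult_left_mono) auto
    also have "\<dots> = L * (norm De * norm (y0 - ym))" by simp
    also have "\<dots> \<le> L * (((norm De)\<^sup>2 + (norm (y0 - ym))\<^sup>2) / 2)"
    proof (rule mult_left_mono[OF _ L])
      have "0 \<le> (norm De - norm (y0 - ym))\<^sup>2" by simp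
      then show "norm De * norm (y0 - ym) \<le> ((norm De)\<^sup>2 + (norm (y0 - ym))\<^sup>2) / 2"
        by (simp add: power2_diff)
    qed
    finally show ?thesis by simp
  qed
  have vBC: "inner v BC = inner v (2 *\<^sub>R B y0 - B ym - B xb) + inner v cv"
    unfolding BC_def cv_def by (simp add: inner_add_right)
  have gE4: "\<gamma> * inner v cv \<ge> \<gamma> * (- (norm De)\<^sup>2 / (4 * \<beta>))" using E4 g by (intro mult_left_mono) auto
  have gE6: "\<gamma> * inner De bv \<ge> - (\<gamma> * (L / 2 * ((norm De)\<^sup>2 + (norm (y0 - ym))\<^sup>2)))"
  proof -
    have "- (L / 2 * ((norm De)\<^sup>2 + (norm (y0 - ym))\<^sup>2)) \<le> inner De bv" using E6 by linarith
    then show ?thesis using g mult_left_mono[of _ _ \<gamma>] by (metis less_imp_le mult_minus_right)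
  qed
  have gmB: "\<gamma> * inner v (B y1 - B xb) \<ge> 0" using mB g unfolding v_def by simp
  have alg1: "\<gamma> * (- (norm De)\<^sup>2 / (4 * \<beta>)) = - (\<gamma> / (2 * \<beta>)) * (norm De)\<^sup>2 / 2" by (simp add: field_simps)
  have alg2: "\<gamma> * (L / 2 * ((norm De)\<^sup>2 + (norm (y0 - ym))\<^sup>2)) = (\<gamma> * L * (norm De)\<^sup>2 + \<gamma> * L * (norm (y0 - ym))\<^sup>2) / 2"
    by (simp add: field_simps)
  have alg3: "(\<gamma> / (2 * \<beta>) + 2 * \<gamma> * L) * (norm De)\<^sup>2 = (\<gamma> / (2 * \<beta>)) * (norm De)\<^sup>2 + 2 * (\<gamma> * L * (norm De)\<^sup>2)"
    by (simp add: algebra_simps)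
  have alg4: "\<gamma> * L * (norm De)\<^sup>2 = \<gamma> * L * (norm (y1 - y0))\<^sup>2" unfolding De_def ..
  have main: "\<gamma> * inner v BC = \<gamma> * inner v (B y1 - B xb) - \<gamma> * inner v (B y1 - B y0) + \<gamma> * inner (y0 - xb) bv + \<gamma> * inner De bv + \<gamma> * inner v cv"
    unfolding vBC E5 by (simp add: algebra_simps)
  show ?thesis
    using E1 E2 E3 gE4 gE6 gmB alg1 alg2 alg3 main unfolding d_def De_def v_def bv_def
    by (simp add: algebra_simps)
qed

lemma nonexp_split:
  fixes p q r :: "'a::real_inner"
  assumes "p = q + g *\<^sub>R r" "inner q r \<ge> 0" "g > 0"
  shows "norm q \<le> norm p" "norm (g *\<^sub>R r) \<le> norm p"
proof -
  have "(norm p)\<^sup>2 = (norm q)\<^sup>2 + 2 * g * inner q r + (norm (g *\<^sub>R r))\<^sup>2"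
    unfolding assms(1) power2_norm_eq_inner by (simp add: inner_add_left inner_add_right inner_commute algebra_simps)
  moreover have "2 * g * inner q r \<ge> 0" using assms(2,3) by simp
  ultimately have "(norm q)\<^sup>2 \<le> (norm p)\<^sup>2" "(norm (g *\<^sub>R r))\<^sup>2 \<le> (norm p)\<^sup>2" by simp_all
  then show "norm q \<le> norm p" "norm (g *\<^sub>R r) \<le> norm p" by (simp_all add: power2_le_iff_abs_le)
qed

lemma shifted_bound:
  fixes X d G :: "'a::real_inner"
  assumes "inner X G \<ge> 0"
  shows "(norm (X + d))\<^sup>2 \<le> (norm (X + d + G))\<^sup>2 + (norm d)\<^sup>2"
proof -
  have "(norm (X + d + G))\<^sup>2 = (norm (X + d))\<^sup>2 + 2 * inner X G + ((norm (d + G))\<^sup>2 - (norm d)\<^sup>2)"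
    unfolding power2_norm_eq_inner by (simp add: inner_add_left inner_add_right inner_commute algebra_simps)
  moreover have "(norm (d + G))\<^sup>2 \<ge> 0" by simp
  ultimately show ?thesis using assms by linarith
qed

locale alg =
  fixes A1 A2 :: "'a::{real_inner, complete_space} \<Rightarrow> 'a set"
    and B C :: "'a \<Rightarrow> 'a"
    and L \<beta> \<gamma> :: real
    and x y z :: "nat \<Rightarrow> 'a"
    and y_minus1 :: 'a
  assumes mm1: "maximal_monotone A1" and mm2: "maximal_monotone A2"
    and Bmono: "monotone_fun B" and L0: "L > 0" and BL: "lipschitz_op L B"
    and b0: "\<beta> > 0" and Ccoc: "cocoercive \<beta> C"
    and zne: "zer (op_sum4 A1 A2 B C) \<noteq> {}"
    and g0: "0 < \<gamma>" and gb: "\<gamma> < \<beta> / (2 * (1 + 4 * \<beta> * L))"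
    and xdef: "\<And>n. x (Suc n) = resolvent \<gamma> A1 (z n)"
    and ydef: "\<And>n. y (Suc n) = resolvent \<gamma> A2
            (2 *\<^sub>R x (Suc n) - z n - (2 * \<gamma>) *\<^sub>R B (y n)
             + \<gamma> *\<^sub>R B (if n = 0 then y_minus1 else y (n - 1)) - \<gamma> *\<^sub>R C (y n))"
    and zdef: "\<And>n. z (Suc n) = z n + y (Suc n) - x (Suc n)"
begin

definition "aa n = (1/\<gamma>) *\<^sub>R (z (n - 1) - x n)"
definition "ym n = (if n = 0 then y_minus1 else y (n - 1))"
definition "wv n = 2 *\<^sub>R x (Suc n) - z n - (2 * \<gamma>) *\<^sub>R B (y n) + \<gamma> *\<^sub>R B (ym n) - \<gamma> *\<^sub>R C (y n)"
definition "bbv n = (1/\<gamma>) *\<^sub>R (wv (n - 1) - y n)"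
definition "dd n = z (Suc n) - z n"
definition "cc = \<gamma> / (2 * \<beta>) + 2 * \<gamma> * L"
definition "Fix = {zb. \<exists>xb ab bb. ab \<in> A1 xb \<and> bb \<in> A2 xb \<and> ab + bb + B xb + C xb = 0 \<and> zb = xb + \<gamma> *\<^sub>R ab}"

lemma mono1: "u \<in> A1 p \<Longrightarrow> v \<in> A1 q \<Longrightarrow> inner (p - q) (u - v) \<ge> 0"
  using mm1 unfolding maximal_monotone_def monotone_op_def by blast

lemma mono2: "u \<in> A2 p \<Longrightarrow> v \<in> A2 q \<Longrightarrow> inner (p - q) (u - v) \<ge> 0"
  using mm2 unfolding maximal_monotone_def monotone_op_def by blast

lemma R1: "aa (Suc k) \<in> A1 (x (Suc k))" "z k = x (Suc k) + \<gamma> *\<^sub>R aa (Suc k)"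
proof -
  obtain u where u: "u \<in> A1 (x (Suc k))" "z k = x (Suc k) + \<gamma> *\<^sub>R u"
    using resolvent_in[OF mm1 g0, of "z k"] unfolding xdef[symmetric] by blast
  have "aa (Suc k) = u" unfolding aa_def using u(2) g0 by simp
  then show "aa (Suc k) \<in> A1 (x (Suc k))" "z k = x (Suc k) + \<gamma> *\<^sub>R aa (Suc k)" using u by simp_all
qed

lemma ydef': "y (Suc n) = resolvent \<gamma> A2 (wv n)"
  unfolding wv_def ym_def using ydef by simp

lemma R2: "bbv (Suc k) \<in> A2 (y (Suc k))" "wv k = y (Suc k) + \<gamma> *\<^sub>R bbv (Suc k)"
proof -
  obtain u where u: "u \<in> A2 (y (Suc k))" "wv k = y (Suc k) + \<gamma> *\<^sub>R u"
    using resolvent_in[OF mm2 g0, of "wv k"] unfolding ydef'[symmetric] by blast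
  have "bbv (Suc k) = u" unfolding bbv_def using u(2) g0 by simp
  then show "bbv (Suc k) \<in> A2 (y (Suc k))" "wv k = y (Suc k) + \<gamma> *\<^sub>R bbv (Suc k)" using u by simp_all
qed

lemma R3: "z (Suc k) = y (Suc k) + \<gamma> *\<^sub>R aa (Suc k)"
  using zdef[of k] R1(2)[of k] by (simp add: algebra_simps)

lemma dd_eq: "dd k = y (Suc k) - x (Suc k)"
  unfolding dd_def using zdef[of k] by simp

lemma cc_facts: "4 * cc < 1" "\<gamma> * L \<le> 2 * cc" "\<gamma> * L < 1" "cc > 0"
proof -
  have d: "2 * (1 + 4 * \<beta> * L) > 0" using b0 L0 by (simp add: add_pos_pos)
  have "\<gamma> * (2 * (1 + 4 * \<beta> * L)) < \<beta>" using gb d by (simp add: pos_less_divide_eq)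
  then have h: "2 * \<gamma> + 8 * \<gamma> * \<beta> * L < \<beta>" by (simp add: algebra_simps)
  have "4 * cc = (2 * \<gamma> + 8 * \<gamma> * \<beta> * L) / \<beta>" unfolding cc_def using b0 by (simp add: field_simps)
  also have "\<dots> < 1" using h b0 by simp
  finally show c4: "4 * cc < 1" .
  have p1: "\<gamma> / (2 * \<beta>) > 0" using g0 b0 by simp
  have p2: "\<gamma> * L > 0" using g0 L0 by simp
  have e2: "2 * cc = 2 * (\<gamma> / (2 * \<beta>)) + 4 * (\<gamma> * L)" unfolding cc_def by (simp add: algebra_simps)
  show "\<gamma> * L \<le> 2 * cc" using e2 p1 p2 by linarith
  show "\<gamma> * L < 1" using c4 p1 p2 unfolding cc_def by simp
  show "cc > 0" unfolding cc_def using p1 p2 by simp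
qed

lemma Cmono: "monotone_fun C"
  unfolding monotone_fun_def
proof (intro allI)
  fix u v
  have "inner (u - v) (C u - C v) \<ge> \<beta> * (norm (C u - C v))\<^sup>2" using Ccoc unfolding cocoercive_def by blast
  moreover have "\<beta> * (norm (C u - C v))\<^sup>2 \<ge> 0" using b0 by simp
  ultimately show "inner (u - v) (C u - C v) \<ge> 0" by linarith
qed

lemma CL: "norm (C u - C v) \<le> (1/\<beta>) * norm (u - v)"
proof (cases "C u - C v = 0")
  case True thus ?thesis using b0 by simp
next
  case False
  then have n: "norm (C u - C v) > 0" by simp
  have "\<beta> * (norm (C u - C v))\<^sup>2 \<le> inner (u - v) (C u - C v)" using Ccoc unfolding cocoercive_def by blast
  also have "\<dots> \<le> norm (u - v) * norm (C u - C v)" using Cauchy_Schwarz_ineq2[of "u - v" "C u - C v"] by linarith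
  finally have "\<beta> * norm (C u - C v) * norm (C u - C v) \<le> norm (u - v) * norm (C u - C v)"
    by (simp add: power2_eq_square mult.assoc)
  then have "\<beta> * norm (C u - C v) \<le> norm (u - v)" using n by simp
  then show ?thesis using b0 by (simp add: field_simps)
qed

lemma BLip: "norm (B u - B v) \<le> L * norm (u - v)"
  using BL unfolding lipschitz_op_def by blast

lemma Fix_ne: "Fix \<noteq> {}"
proof -
  obtain x0 where "x0 \<in> zer (op_sum4 A1 A2 B C)" using zne by blast
  then obtain a b where ab: "a \<in> A1 x0" "b \<in> A2 x0" "0 = a + b + B x0 + C x0"
    unfolding zer_def op_sum4_def by blast
  then have "x0 + \<gamma> *\<^sub>R a \<in> Fix" unfolding Fix_def by force
  thus ?thesis by blast
qed

lemma Fix_res: "zb \<in> Fix \<Longrightarrow> \<exists>ab bb. ab \<in> A1 (resolvent \<gamma> A1 zb) \<and> bb \<in> A2 (resolvent \<gamma> A1 zb) \<and> ab + bb + B (resolvent \<gamma> A1 zb) + C (resolvent \<gamma> A1 zb) = 0 \<and> zb = resolvent \<gamma> A1 zb + \<gamma> *\<^sub>R ab"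
proof -
  assume "zb \<in> Fix"
  then obtain xb ab bb where h: "ab \<in> A1 xb" "bb \<in> A2 xb" "ab + bb + B xb + C xb = 0" "zb = xb + \<gamma> *\<^sub>R ab"
    unfolding Fix_def by blast
  have "resolvent \<gamma> A1 zb = xb" using resolvent_eq[OF mm1 g0 h(1) h(4)] .
  thus ?thesis using h by blast
qed

lemma firm: "norm (x (Suc (Suc k)) - y (Suc k)) \<le> norm (dd k)"
  and xstep: "norm (x (Suc (Suc k)) - x (Suc k)) \<le> norm (dd k)"
proof -
  have e: "dd k = (x (Suc (Suc k)) - x (Suc k)) + \<gamma> *\<^sub>R (aa (Suc (Suc k)) - aa (Suc k))"
    unfolding dd_def using R1(2)[of k] R1(2)[of "Suc k"] by (simp add: algebra_simps)
  have m: "inner (x (Suc (Suc k)) - x (Suc k)) (aa (Suc (Suc k)) - aa (Suc k)) \<ge> 0"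
    using mono1[OF R1(1) R1(1)] .
  have "x (Suc (Suc k)) - y (Suc k) = - (\<gamma> *\<^sub>R (aa (Suc (Suc k)) - aa (Suc k)))"
    using R3[of k] R1(2)[of "Suc k"] by (simp add: algebra_simps)
  then show "norm (x (Suc (Suc k)) - y (Suc k)) \<le> norm (dd k)"
    using nonexp_split(2)[OF e m g0] by simp
  show "norm (x (Suc (Suc k)) - x (Suc k)) \<le> norm (dd k)"
    using nonexp_split(1)[OF e m g0] .
qed

lemma dy_bound: "norm (y (Suc (Suc k)) - y (Suc k)) \<le> norm (dd (Suc k)) + norm (dd k)"
proof -
  have e: "y (Suc (Suc k)) - y (Suc k) = dd (Suc k) + (x (Suc (Suc k)) - y (Suc k))"
    using dd_eq[of "Suc k"] by simp
  have "norm (y (Suc (Suc k)) - y (Suc k)) \<le> norm (dd (Suc k)) + norm (x (Suc (Suc k)) - y (Suc k))"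
    unfolding e by (rule norm_triangle_ineq)
  then show ?thesis using firm[of k] by linarith
qed

lemma dy_sq: "(norm (y (Suc (Suc k)) - y (Suc k)))\<^sup>2 \<le> 2 * (norm (dd (Suc k)))\<^sup>2 + 2 * (norm (dd k))\<^sup>2"
proof -
  have "(norm (y (Suc (Suc k)) - y (Suc k)))\<^sup>2 \<le> (norm (dd (Suc k)) + norm (dd k))\<^sup>2"
    using dy_bound[of k] by (intro power_mono) auto
  also have "\<dots> \<le> 2 * (norm (dd (Suc k)))\<^sup>2 + 2 * (norm (dd k))\<^sup>2"
  proof -
    have "0 \<le> (norm (dd (Suc k)) - norm (dd k))\<^sup>2" by simp
    then show ?thesis by (simp add: power2_sum power2_diff)
  qed
  finally show ?thesis .
qed

lemma xnonexp:
  assumes "ab \<in> A1 xb" "zb = xb + \<gamma> *\<^sub>R ab"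
  shows "norm (x (Suc k) - xb) \<le> norm (z k - zb)"
proof -
  have e: "z k - zb = (x (Suc k) - xb) + \<gamma> *\<^sub>R (aa (Suc k) - ab)"
    using R1(2)[of k] assms(2) by (simp add: algebra_simps)
  show ?thesis using nonexp_split(1)[OF e mono1[OF R1(1) assms(1)] g0] .
qed

lemma ybound:
  assumes "ab \<in> A1 xb" "zb = xb + \<gamma> *\<^sub>R ab"
  shows "(norm (y (Suc k) - xb))\<^sup>2 \<le> (norm (z (Suc k) - zb))\<^sup>2 + (norm (dd k))\<^sup>2"
proof -
  have e: "z (Suc k) - zb = (x (Suc k) - xb) + dd k + \<gamma> *\<^sub>R (aa (Suc k) - ab)"
    using R3[of k] dd_eq[of k] assms(2) by (simp add: algebra_simps)
  have "inner (x (Suc k) - xb) (\<gamma> *\<^sub>R (aa (Suc k) - ab)) \<ge> 0"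
    using mono1[OF R1(1) assms(1)] g0 by simp
  from shifted_bound[OF this, of "dd k"]
  have "(norm (x (Suc k) - xb + dd k))\<^sup>2 \<le> (norm (z (Suc k) - zb))\<^sup>2 + (norm (dd k))\<^sup>2" unfolding e .
  moreover have "x (Suc k) - xb + dd k = y (Suc k) - xb" using dd_eq[of k] by simp
  ultimately show ?thesis by simp
qed

end

context alg
begin

definition "Phi zb xb k = (norm (z (Suc k) - zb))\<^sup>2 - 2 * \<gamma> * inner (y (Suc k) - xb) (B (y (Suc k)) - B (y k))
   + \<gamma> * L * (norm (y (Suc k) - y k))\<^sup>2 + 2 * cc * (norm (dd k))\<^sup>2"

lemma Phi_step:
  assumes ab: "ab \<in> A1 xb" and bb: "bb \<in> A2 xb" and fb: "ab + bb + B xb + C xb = 0" and fz: "zb = xb + \<gamma> *\<^sub>R ab"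
  shows "Phi zb xb (Suc k) \<le> Phi zb xb k - (1 - 4 * cc) * (norm (dd (Suc k)))\<^sup>2"
proof -
  have r2: "y (Suc (Suc k)) + \<gamma> *\<^sub>R bbv (Suc (Suc k)) = 2 *\<^sub>R x (Suc (Suc k)) - z (Suc k) - (2 * \<gamma>) *\<^sub>R B (y (Suc k)) + \<gamma> *\<^sub>R B (y k) - \<gamma> *\<^sub>R C (y (Suc k))"
    using R2(2)[of "Suc k"] unfolding wv_def ym_def by simp
  have cC: "inner (y (Suc k) - xb) (C (y (Suc k)) - C xb) \<ge> \<beta> * (norm (C (y (Suc k)) - C xb))\<^sup>2"
    using Ccoc unfolding cocoercive_def by blast
  have mB: "inner (y (Suc (Suc k)) - xb) (B (y (Suc (Suc k))) - B xb) \<ge> 0" using Bmono unfolding monotone_fun_def by blast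
  have st: "(norm (z (Suc (Suc k)) - zb))\<^sup>2 - 2 * \<gamma> * inner (y (Suc (Suc k)) - xb) (B (y (Suc (Suc k))) - B (y (Suc k))) + \<gamma> * L * (norm (y (Suc (Suc k)) - y (Suc k)))\<^sup>2
     \<le> (norm (z (Suc k) - zb))\<^sup>2 - 2 * \<gamma> * inner (y (Suc k) - xb) (B (y (Suc k)) - B (y k)) + \<gamma> * L * (norm (y (Suc k) - y k))\<^sup>2
        - (norm (z (Suc (Suc k)) - z (Suc k)))\<^sup>2 + (\<gamma> / (2 * \<beta>) + 2 * \<gamma> * L) * (norm (y (Suc (Suc k)) - y (Suc k)))\<^sup>2"
    by (rule step_ineq[OF g0 b0 _ mono1[OF R1(1) ab] mono2[OF R2(1) bb] mB cC BLip R1(2) r2 zdef fb fz]) (use L0 in simp)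
  have dyq: "(norm (y (Suc (Suc k)) - y (Suc k)))\<^sup>2 \<le> 2 * (norm (dd (Suc k)))\<^sup>2 + 2 * (norm (dd k))\<^sup>2" by (rule dy_sq)
  have "cc * (norm (y (Suc (Suc k)) - y (Suc k)))\<^sup>2 \<le> cc * (2 * (norm (dd (Suc k)))\<^sup>2 + 2 * (norm (dd k))\<^sup>2)"
    using dyq cc_facts(4) by (intro mult_left_mono) auto
  moreover have "z (Suc (Suc k)) - z (Suc k) = dd (Suc k)" unfolding dd_def ..
  ultimately show ?thesis using st unfolding Phi_def cc_def[symmetric] by (simp add: algebra_simps)
qed

lemma Phi_lower:
  assumes ab: "ab \<in> A1 xb" and fz: "zb = xb + \<gamma> *\<^sub>R ab"
  shows "Phi zb xb k \<ge> (1 - \<gamma> * L) * (norm (z (Suc k) - zb))\<^sup>2"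
proof -
  define Y where "Y = y (Suc k) - xb"
  define De where "De = y (Suc k) - y k"
  define nY where "nY = (norm Y)\<^sup>2"
  define nD where "nD = (norm De)\<^sup>2"
  define nZ where "nZ = (norm (z (Suc k) - zb))\<^sup>2"
  define nd where "nd = (norm (dd k))\<^sup>2"
  have yb: "nY \<le> nZ + nd" unfolding nY_def nZ_def nd_def Y_def by (rule ybound[OF ab fz])
  have "inner Y (B (y (Suc k)) - B (y k)) \<le> norm Y * norm (B (y (Suc k)) - B (y k))"
    using Cauchy_Schwarz_ineq2[of Y "B (y (Suc k)) - B (y k)"] by linarith
  also have "\<dots> \<le> norm Y * (L * norm De)" unfolding De_def using BLip by (intro mult_left_mono) auto
  also have "\<dots> \<le> L / 2 * (nY + nD)"
  proof -
    have "0 \<le> (norm Y - norm De)\<^sup>2" by simp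
    then have "norm Y * norm De \<le> (nY + nD) / 2" unfolding nY_def nD_def by (simp add: power2_diff)
    then have "L * (norm Y * norm De) \<le> L * ((nY + nD) / 2)" using L0 by (intro mult_left_mono) auto
    then show ?thesis by (simp add: algebra_simps)
  qed
  finally have i1: "inner Y (B (y (Suc k)) - B (y k)) \<le> L / 2 * (nY + nD)" .
  have i2: "2 * \<gamma> * inner Y (B (y (Suc k)) - B (y k)) \<le> \<gamma> * L * nY + \<gamma> * L * nD"
  proof -
    have "2 * \<gamma> * inner Y (B (y (Suc k)) - B (y k)) \<le> 2 * \<gamma> * (L / 2 * (nY + nD))"
      using i1 g0 by (intro mult_left_mono) auto
    then show ?thesis by (simp add: algebra_simps)
  qed
  have gl: "\<gamma> * L > 0" using g0 L0 by simp
  have i3: "\<gamma> * L * nY \<le> \<gamma> * L * nZ + \<gamma> * L * nd"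
    using yb gl by (metis distrib_left less_imp_le mult_left_mono)
  have i4: "\<gamma> * L * nd \<le> 2 * cc * nd"
    using cc_facts(2) unfolding nd_def by (intro mult_right_mono) auto
  have "Phi zb xb k = nZ - 2 * \<gamma> * inner Y (B (y (Suc k)) - B (y k)) + \<gamma> * L * nD + 2 * cc * nd"
    unfolding Phi_def nZ_def Y_def nD_def De_def nd_def ..
  moreover have "(1 - \<gamma> * L) * nZ = nZ - \<gamma> * L * nZ" by (simp add: algebra_simps)
  ultimately show ?thesis unfolding nZ_def[symmetric] using i2 i3 i4 by linarith
qed

lemma Phi_facts:
  assumes ab: "ab \<in> A1 xb" and bb: "bb \<in> A2 xb" and fb: "ab + bb + B xb + C xb = 0" and fz: "zb = xb + \<gamma> *\<^sub>R ab"
  shows "decseq (Phi zb xb)" "\<And>k. Phi zb xb k \<ge> 0" "convergent (Phi zb xb)"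
proof -
  have c4: "1 - 4 * cc > 0" using cc_facts(1) by simp
  show dec: "decseq (Phi zb xb)"
  proof (rule decseq_SucI)
    fix k
    have "(1 - 4 * cc) * (norm (dd (Suc k)))\<^sup>2 \<ge> 0" using c4 by simp
    then show "Phi zb xb (Suc k) \<le> Phi zb xb k" using Phi_step[OF ab bb fb fz, of k] by linarith
  qed
  show nn: "\<And>k. Phi zb xb k \<ge> 0"
  proof -
    fix k
    have "(1 - \<gamma> * L) * (norm (z (Suc k) - zb))\<^sup>2 \<ge> 0" using cc_facts(3) by simp
    then show "Phi zb xb k \<ge> 0" using Phi_lower[OF ab fz, of k] by linarith
  qed
  have "Bseq (Phi zb xb)"
  proof (rule BseqI')
    fix k
    have "Phi zb xb k \<le> Phi zb xb 0" using dec by (simp add: decseqD)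
    then show "norm (Phi zb xb k) \<le> Phi zb xb 0" using nn[of k] by simp
  qed
  moreover have "monoseq (Phi zb xb)" using dec unfolding monoseq_def decseq_def by blast
  ultimately show "convergent (Phi zb xb)" by (rule Bseq_monoseq_convergent)
qed

lemma dd_tendsto: "dd \<longlonglongrightarrow> 0"
proof -
  obtain zb where zb: "zb \<in> Fix" using Fix_ne by blast
  then obtain xb ab bb where h: "ab \<in> A1 xb" "bb \<in> A2 xb" "ab + bb + B xb + C xb = 0" "zb = xb + \<gamma> *\<^sub>R ab"
    unfolding Fix_def by blast
  have c4: "1 - 4 * cc > 0" using cc_facts(1) by simp
  have c4': "1 - 4 * cc \<noteq> 0" using c4 by force
  obtain l where l: "Phi zb xb \<longlonglongrightarrow> l" using Phi_facts(3)[OF h] unfolding convergent_def by blast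
  have "(\<lambda>k. Phi zb xb (Suc k)) \<longlonglongrightarrow> l" using l by (rule LIMSEQ_Suc)
  then have "(\<lambda>k. Phi zb xb k - Phi zb xb (Suc k)) \<longlonglongrightarrow> l - l"
    by (intro tendsto_intros l)
  then have "(\<lambda>k. Phi zb xb k - Phi zb xb (Suc k)) \<longlonglongrightarrow> 0" by simp
  then have t: "(\<lambda>k. (Phi zb xb k - Phi zb xb (Suc k)) / (1 - 4 * cc)) \<longlonglongrightarrow> 0" by (rule tendsto_divide_zero)
  have "(\<lambda>k. dd (Suc k)) \<longlonglongrightarrow> 0"
  proof (rule null_of_sq_bound[OF _ t])
    fix k
    have "(1 - 4 * cc) * (norm (dd (Suc k)))\<^sup>2 \<le> Phi zb xb k - Phi zb xb (Suc k)" using Phi_step[OF h, of k] by linarith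
    then show "(norm (dd (Suc k)))\<^sup>2 \<le> (Phi zb xb k - Phi zb xb (Suc k)) / (1 - 4 * cc)"
      using c4 by (simp add: pos_le_divide_eq mult.commute)
  qed
  then show ?thesis by (rule LIMSEQ_imp_Suc)
qed

lemma z_bounded: "\<exists>M. \<forall>k. norm (z k) \<le> M"
proof -
  obtain zb where zb: "zb \<in> Fix" using Fix_ne by blast
  then obtain xb ab bb where h: "ab \<in> A1 xb" "bb \<in> A2 xb" "ab + bb + B xb + C xb = 0" "zb = xb + \<gamma> *\<^sub>R ab"
    unfolding Fix_def by blast
  have gl: "1 - \<gamma> * L > 0" using cc_facts(3) by simp
  define R where "R = sqrt (Phi zb xb 0 / (1 - \<gamma> * L))"
  have "norm (z (Suc k) - zb) \<le> R" for k
  proof -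
    have "(1 - \<gamma> * L) * (norm (z (Suc k) - zb))\<^sup>2 \<le> Phi zb xb k" by (rule Phi_lower[OF h(1) h(4)])
    also have "\<dots> \<le> Phi zb xb 0" using Phi_facts(1)[OF h] by (simp add: decseqD)
    finally have "(norm (z (Suc k) - zb))\<^sup>2 \<le> Phi zb xb 0 / (1 - \<gamma> * L)" using gl by (simp add: pos_le_divide_eq mult.commute)
    then show ?thesis unfolding R_def by (rule real_le_rsqrt)
  qed
  then have "norm (z (Suc k)) \<le> norm zb + R" for k using norm_triangle_sub[of "z (Suc k)" zb] by (smt (verit) norm_minus_commute norm_triangle_ineq2)
  then have A: "\<forall>k. norm (z (Suc k)) \<le> norm zb + R" by blast
  have "norm (z k) \<le> max (norm (z 0)) (norm zb + R)" for k
  proof (cases k)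
    case 0 then show ?thesis by simp
  next
    case (Suc j) then show ?thesis using A by (metis max.coboundedI2)
  qed
  then show ?thesis by blast
qed

end

context alg
begin

lemma x_bounded: "\<exists>M. \<forall>k. norm (x (Suc k)) \<le> M"
proof -
  obtain Mz where Mz: "\<And>k. norm (z k) \<le> Mz" using z_bounded by blast
  obtain zb where zb: "zb \<in> Fix" using Fix_ne by blast
  then obtain xb ab bb where h: "ab \<in> A1 xb" "zb = xb + \<gamma> *\<^sub>R ab" unfolding Fix_def by blast
  have "norm (x (Suc k)) \<le> norm xb + Mz + norm zb" for k
  proof -
    have "norm (x (Suc k) - xb) \<le> norm (z k - zb)" by (rule xnonexp[OF h])
    also have "\<dots> \<le> norm (z k) + norm zb" by (rule norm_triangle_ineq4)
    finally have "norm (x (Suc k) - xb) \<le> norm (z k) + norm zb" .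
    then show ?thesis using Mz[of k] norm_triangle_sub[of "x (Suc k)" xb] by linarith
  qed
  then show ?thesis by blast
qed

lemma dd_bounded: "\<exists>M. \<forall>k. norm (dd k) \<le> M"
proof -
  obtain Mz where Mz: "\<And>k. norm (z k) \<le> Mz" using z_bounded by blast
  have "norm (dd k) \<le> 2 * Mz" for k
    unfolding dd_def using norm_triangle_ineq4[of "z (Suc k)" "z k"] Mz[of k] Mz[of "Suc k"] by linarith
  then show ?thesis by blast
qed

lemma y_bounded: "\<exists>M. \<forall>k. norm (y (Suc k)) \<le> M"
proof -
  obtain Mx where Mx: "\<And>k. norm (x (Suc k)) \<le> Mx" using x_bounded by blast
  obtain Md where Md: "\<And>k. norm (dd k) \<le> Md" using dd_bounded by blast
  have "y (Suc k) = x (Suc k) + dd k" for k using dd_eq[of k] by simp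
  then have "norm (y (Suc k)) \<le> Mx + Md" for k using norm_triangle_ineq[of "x (Suc k)" "dd k"] Mx[of k] Md[of k] by simp
  then show ?thesis by blast
qed

lemma aa_bounded: "\<exists>M. \<forall>k. norm (aa (Suc k)) \<le> M"
proof -
  obtain Mx where Mx: "\<And>k. norm (x (Suc k)) \<le> Mx" using x_bounded by blast
  obtain Mz where Mz: "\<And>k. norm (z k) \<le> Mz" using z_bounded by blast
  have "norm (aa (Suc k)) \<le> (Mz + Mx) / \<gamma>" for k
  proof -
    have "\<gamma> *\<^sub>R aa (Suc k) = z k - x (Suc k)" using R1(2)[of k] by simp
    then have "\<gamma> * norm (aa (Suc k)) = norm (z k - x (Suc k))" using g0 by (metis abs_of_pos norm_scaleR)
    also have "\<dots> \<le> Mz + Mx" using norm_triangle_ineq4[of "z k" "x (Suc k)"] Mz[of k] Mx[of k] by linarith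
    finally show ?thesis using g0 by (simp add: pos_le_divide_eq mult.commute)
  qed
  then show ?thesis by blast
qed

lemma dy_tendsto: "(\<lambda>k. y (Suc k) - y k) \<longlonglongrightarrow> 0"
proof (rule LIMSEQ_imp_Suc, rule Lim_null_comparison)
  show "\<forall>\<^sub>F j in sequentially. norm (y (Suc (Suc j)) - y (Suc j)) \<le> norm (dd (Suc j)) + norm (dd j)"
    using dy_bound by (intro always_eventually allI) auto
  have ds: "(\<lambda>j. dd (Suc j)) \<longlonglongrightarrow> 0" using LIMSEQ_Suc[OF dd_tendsto] .
  show "(\<lambda>j. norm (dd (Suc j)) + norm (dd j)) \<longlonglongrightarrow> 0"
    using tendsto_add[OF tendsto_norm_zero[OF ds] tendsto_norm_zero[OF dd_tendsto]] by simp
qed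

lemma Bdy_tendsto: "(\<lambda>k. B (y (Suc k)) - B (y k)) \<longlonglongrightarrow> 0"
proof (rule Lim_null_comparison)
  show "\<forall>\<^sub>F k in sequentially. norm (B (y (Suc k)) - B (y k)) \<le> L * norm (y (Suc k) - y k)"
    using BLip by (intro always_eventually allI) auto
  show "(\<lambda>k. L * norm (y (Suc k) - y k)) \<longlonglongrightarrow> 0"
    using tendsto_mult_right_zero[OF tendsto_norm_zero[OF dy_tendsto], of L] .
qed

lemma Cdy_tendsto: "(\<lambda>k. C (y (Suc k)) - C (y k)) \<longlonglongrightarrow> 0"
proof (rule Lim_null_comparison)
  show "\<forall>\<^sub>F k in sequentially. norm (C (y (Suc k)) - C (y k)) \<le> (1/\<beta>) * norm (y (Suc k) - y k)"
    using CL by (intro always_eventually allI) auto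
  show "(\<lambda>k. (1/\<beta>) * norm (y (Suc k) - y k)) \<longlonglongrightarrow> 0"
    using tendsto_mult_right_zero[OF tendsto_norm_zero[OF dy_tendsto], of "1/\<beta>"] .
qed

lemma sq_null: "f \<longlonglongrightarrow> 0 \<Longrightarrow> (\<lambda>k. (norm (f k))\<^sup>2) \<longlonglongrightarrow> 0"
  using tendsto_power[OF tendsto_norm_zero, of f sequentially 2] by simp

lemma norm_conv:
  assumes zb: "zb \<in> Fix"
  shows "convergent (\<lambda>k. (norm (z k - zb))\<^sup>2)"
proof -
  obtain xb ab bb where h: "ab \<in> A1 xb" "bb \<in> A2 xb" "ab + bb + B xb + C xb = 0" "zb = xb + \<gamma> *\<^sub>R ab"
    using zb unfolding Fix_def by blast
  obtain l where l: "Phi zb xb \<longlonglongrightarrow> l" using Phi_facts(3)[OF h] unfolding convergent_def by blast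
  obtain My where My: "\<And>k. norm (y (Suc k)) \<le> My" using y_bounded by blast
  have Yb: "norm (y (Suc k) - xb) \<le> My + norm xb" for k using norm_triangle_ineq4[of "y (Suc k)" xb] My[of k] by linarith
  have i0: "(\<lambda>k. inner (B (y (Suc k)) - B (y k)) (y (Suc k) - xb)) \<longlonglongrightarrow> 0"
    using Bdy_tendsto Yb by (rule inner_null_bounded)
  have eq: "(norm (z (Suc k) - zb))\<^sup>2 = Phi zb xb k + 2 * \<gamma> * inner (B (y (Suc k)) - B (y k)) (y (Suc k) - xb)
      - \<gamma> * L * (norm (y (Suc k) - y k))\<^sup>2 - 2 * cc * (norm (dd k))\<^sup>2" for k
    unfolding Phi_def by (simp add: inner_commute)
  have "(\<lambda>k. Phi zb xb k + 2 * \<gamma> * inner (B (y (Suc k)) - B (y k)) (y (Suc k) - xb)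
      - \<gamma> * L * (norm (y (Suc k) - y k))\<^sup>2 - 2 * cc * (norm (dd k))\<^sup>2) \<longlonglongrightarrow> l + 2 * \<gamma> * 0 - \<gamma> * L * 0 - 2 * cc * 0"
    by (intro tendsto_intros l i0 sq_null dy_tendsto dd_tendsto)
  then have "(\<lambda>k. (norm (z (Suc k) - zb))\<^sup>2) \<longlonglongrightarrow> l" unfolding eq by simp
  then have "(\<lambda>k. (norm (z k - zb))\<^sup>2) \<longlonglongrightarrow> l" by (rule LIMSEQ_imp_Suc)
  then show ?thesis unfolding convergent_def by blast
qed

definition "ee k = aa (Suc k) + bbv (Suc k) + B (y (Suc k)) + C (y (Suc k))"

lemma ee_tendsto: "ee \<longlonglongrightarrow> 0"
proof (rule LIMSEQ_imp_Suc, rule Lim_null_comparison)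
  define Dy where "Dy k = y (Suc k) - y k" for k
  have gne: "\<gamma> \<noteq> 0" using g0 by simp
  have bnd: "norm (ee (Suc j)) \<le> norm (dd (Suc j)) / \<gamma> + (L * norm (Dy (Suc j)) + L * norm (Dy j) + (1/\<beta>) * norm (Dy (Suc j)))" for j
  proof -
    define n where "n = Suc j"
    define W where "W = (B (y (Suc n)) - B (y n)) - (B (y n) - B (y j)) + (C (y (Suc n)) - C (y n))"
    have hA: "\<gamma> *\<^sub>R aa (Suc n) = z n - x (Suc n)" using R1(2)[of n] by simp
    have hB: "\<gamma> *\<^sub>R bbv (Suc n) = wv n - y (Suc n)" using R2(2)[of n] by simp
    have wvn: "wv n = 2 *\<^sub>R x (Suc n) - z n - (2 * \<gamma>) *\<^sub>R B (y n) + \<gamma> *\<^sub>R B (y j) - \<gamma> *\<^sub>R C (y n)"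
      unfolding wv_def ym_def n_def by simp
    have h2: "(2 * \<gamma>) *\<^sub>R B (y n) = \<gamma> *\<^sub>R B (y n) + \<gamma> *\<^sub>R B (y n)" by (metis scaleR_2 scaleR_scaleR)
    have "\<gamma> *\<^sub>R ee n = \<gamma> *\<^sub>R aa (Suc n) + \<gamma> *\<^sub>R bbv (Suc n) + \<gamma> *\<^sub>R B (y (Suc n)) + \<gamma> *\<^sub>R C (y (Suc n))"
      unfolding ee_def by (simp add: scaleR_add_right)
    also have "\<dots> = - dd n + \<gamma> *\<^sub>R W"
      unfolding hA hB wvn h2 dd_eq W_def by (simp add: algebra_simps scaleR_2)
    finally have gee: "\<gamma> *\<^sub>R ee n = - dd n + \<gamma> *\<^sub>R W" .
    have "ee n = (1/\<gamma>) *\<^sub>R (\<gamma> *\<^sub>R ee n)" using gne by simp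
    also have "\<dots> = (1/\<gamma>) *\<^sub>R (- dd n) + W" unfolding gee scaleR_add_right scaleR_scaleR using gne by simp
    finally have eeq: "ee n = (1/\<gamma>) *\<^sub>R (- dd n) + W" .
    have "norm (ee n) \<le> norm ((1/\<gamma>) *\<^sub>R (- dd n)) + norm W" unfolding eeq by (rule norm_triangle_ineq)
    moreover have "norm ((1/\<gamma>) *\<^sub>R (- dd n)) = norm (dd n) / \<gamma>" using g0 by simp
    moreover have "norm W \<le> L * norm (Dy n) + L * norm (Dy j) + (1/\<beta>) * norm (Dy n)"
    proof -
      have "norm W \<le> norm ((B (y (Suc n)) - B (y n)) - (B (y n) - B (y j))) + norm (C (y (Suc n)) - C (y n))"
        unfolding W_def by (rule norm_triangle_ineq)
      also have "\<dots> \<le> (norm (B (y (Suc n)) - B (y n)) + norm (B (y n) - B (y j))) + norm (C (y (Suc n)) - C (y n))"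
        using norm_triangle_ineq4 by (intro add_right_mono) auto
      also have "\<dots> \<le> L * norm (Dy n) + L * norm (Dy j) + (1/\<beta>) * norm (Dy n)"
        unfolding Dy_def n_def using BLip[of "y (Suc (Suc j))" "y (Suc j)"] BLip[of "y (Suc j)" "y j"] CL[of "y (Suc (Suc j))" "y (Suc j)"]
        by (intro add_mono) auto
      finally show ?thesis .
    qed
    ultimately show ?thesis unfolding n_def by (simp add: abs_of_pos[OF g0])
  qed
  show "\<forall>\<^sub>F j in sequentially. norm (ee (Suc j)) \<le> norm (dd (Suc j)) / \<gamma> + (L * norm (Dy (Suc j)) + L * norm (Dy j) + (1/\<beta>) * norm (Dy (Suc j)))"
    using bnd by (intro always_eventually allI) auto
  have t1: "(\<lambda>j. norm (dd (Suc j))) \<longlonglongrightarrow> 0" using tendsto_norm_zero[OF LIMSEQ_Suc[OF dd_tendsto]] .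
  have t2: "(\<lambda>j. norm (Dy j)) \<longlonglongrightarrow> 0" unfolding Dy_def using tendsto_norm_zero[OF dy_tendsto] .
  have t3: "(\<lambda>j. norm (Dy (Suc j))) \<longlonglongrightarrow> 0" using LIMSEQ_Suc[OF t2] .
  show "(\<lambda>j. norm (dd (Suc j)) / \<gamma> + (L * norm (Dy (Suc j)) + L * norm (Dy j) + (1/\<beta>) * norm (Dy (Suc j)))) \<longlonglongrightarrow> 0"
  proof -
    have "(\<lambda>j. norm (dd (Suc j)) / \<gamma> + (L * norm (Dy (Suc j)) + L * norm (Dy j) + (1/\<beta>) * norm (Dy (Suc j)))) \<longlonglongrightarrow> 0 / \<gamma> + (L * 0 + L * 0 + (1/\<beta>) * 0)"
      by (intro tendsto_intros t1 t2 t3 gne)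
    then show ?thesis by simp
  qed
qed

end

context alg
begin

lemma xstep_tendsto: "(\<lambda>m. x (Suc m) - x m) \<longlonglongrightarrow> 0"
proof (rule LIMSEQ_imp_Suc, rule Lim_null_comparison)
  show "\<forall>\<^sub>F j in sequentially. norm (x (Suc (Suc j)) - x (Suc j)) \<le> norm (dd j)"
    using xstep by (intro always_eventually allI) auto
  show "(\<lambda>j. norm (dd j)) \<longlonglongrightarrow> 0" using tendsto_norm_zero[OF dd_tendsto] .
qed

lemma cluster:
  assumes r: "strict_mono (r::nat\<Rightarrow>nat)"
  shows "\<exists>R::nat\<Rightarrow>nat. \<exists>zs xs. strict_mono R \<and> weakly_converges (z \<circ> r \<circ> R) zs \<and> weakly_converges (x \<circ> r \<circ> R) xs
          \<and> zs \<in> Fix \<and> xs = resolvent \<gamma> A1 zs \<and> xs \<in> zer (op_sum4 A1 A2 B C)"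
proof -
  obtain Mz where Mz: "\<And>k. norm (z k) \<le> Mz" using z_bounded by blast
  obtain Mx where Mx: "\<And>k. norm (x (Suc k)) \<le> Mx" using x_bounded by blast
  obtain Ma where Ma: "\<And>k. norm (aa (Suc k)) \<le> Ma" using aa_bounded by blast
  obtain My where My: "\<And>k. norm (y (Suc k)) \<le> My" using y_bounded by blast
  have "\<And>k. norm ((z \<circ> r) k) \<le> Mz" using Mz by simp
  from weak_seq_compact[of "z \<circ> r" Mz, OF this] obtain r1 :: "nat \<Rightarrow> nat" and zs
    where r1: "strict_mono r1" "weakly_converges (z \<circ> r \<circ> r1) zs" by blast
  have "\<And>k. norm ((\<lambda>k. x (Suc (r (r1 k)))) k) \<le> Mx" using Mx by simp
  from weak_seq_compact[of "\<lambda>k. x (Suc (r (r1 k)))" Mx, OF this] obtain r2 :: "nat \<Rightarrow> nat" and xs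
    where r2: "strict_mono r2" "weakly_converges ((\<lambda>k. x (Suc (r (r1 k)))) \<circ> r2) xs" by blast
  have "\<And>k. norm ((\<lambda>k. aa (Suc (r (r1 (r2 k))))) k) \<le> Ma" using Ma by simp
  from weak_seq_compact[of "\<lambda>k. aa (Suc (r (r1 (r2 k))))" Ma, OF this] obtain r3 :: "nat \<Rightarrow> nat" and us
    where r3: "strict_mono r3" "weakly_converges ((\<lambda>k. aa (Suc (r (r1 (r2 k))))) \<circ> r3) us" by blast
  define R where "R k = r1 (r2 (r3 k))" for k
  have sR: "strict_mono R" unfolding R_def using r1(1) r2(1) r3(1) by (simp add: strict_mono_def)
  have srR: "strict_mono (\<lambda>k. r (R k))" using r sR by (simp add: strict_mono_def)
  define X where "X k = x (Suc (r (R k)))" for k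
  define U where "U k = aa (Suc (r (R k)))" for k
  define Y where "Y k = y (Suc (r (R k)))" for k
  define D where "D v = B v + C v" for v
  define V where "V k = bbv (Suc (r (R k))) + D (Y k)" for k
  have wX: "weakly_converges X xs"
  proof -
    have "weakly_converges (((\<lambda>k. x (Suc (r (r1 k)))) \<circ> r2) \<circ> r3) xs" by (rule weak_subseq[OF r2(2) r3(1)])
    moreover have "((\<lambda>k. x (Suc (r (r1 k)))) \<circ> r2) \<circ> r3 = X" unfolding X_def R_def by (simp add: o_def)
    ultimately show ?thesis by simp
  qed
  have wU: "weakly_converges U us"
  proof -
    have "(\<lambda>k. aa (Suc (r (r1 (r2 k))))) \<circ> r3 = U" unfolding U_def R_def by (simp add: o_def)
    then show ?thesis using r3(2) by simp
  qed
  have wZ: "weakly_converges (z \<circ> r \<circ> R) zs"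
  proof -
    have "strict_mono (r2 \<circ> r3)" using r2(1) r3(1) by (simp add: strict_mono_def)
    from weak_subseq[OF r1(2) this] have "weakly_converges ((z \<circ> r \<circ> r1) \<circ> (r2 \<circ> r3)) zs" .
    moreover have "(z \<circ> r \<circ> r1) \<circ> (r2 \<circ> r3) = z \<circ> r \<circ> R" unfolding R_def by (simp add: o_def)
    ultimately show ?thesis by simp
  qed
  have Dmono: "monotone_fun D"
    unfolding monotone_fun_def D_def
  proof (intro allI)
    fix u v
    have "inner (u - v) (B u - B v) \<ge> 0" using Bmono unfolding monotone_fun_def by blast
    moreover have "inner (u - v) (C u - C v) \<ge> 0" using Cmono unfolding monotone_fun_def by blast
    moreover have "inner (u - v) (B u + C u - (B v + C v)) = inner (u - v) (B u - B v) + inner (u - v) (C u - C v)"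
      by (simp add: inner_diff_right inner_add_right)
    ultimately show "inner (u - v) (B u + C u - (B v + C v)) \<ge> 0" by linarith
  qed
  have DL: "norm (D u - D v) \<le> (L + 1/\<beta>) * norm (u - v)" for u v
  proof -
    have "D u - D v = (B u - B v) + (C u - C v)" unfolding D_def by simp
    then have "norm (D u - D v) \<le> norm (B u - B v) + norm (C u - C v)" using norm_triangle_ineq by metis
    also have "\<dots> \<le> L * norm (u - v) + (1/\<beta>) * norm (u - v)" using BLip CL by (intro add_mono)
    finally show ?thesis by (simp add: algebra_simps)
  qed
  have K0: "L + 1/\<beta> \<ge> 0" using L0 b0 by simp
  have UA: "U k \<in> A1 (X k)" for k unfolding U_def X_def by (rule R1(1))
  have VA: "V k - D (Y k) \<in> A2 (Y k)" for k unfolding V_def Y_def using R2(1) by simp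
  have XY: "(\<lambda>k. X k - Y k) \<longlonglongrightarrow> 0"
  proof -
    have "(\<lambda>k. dd (r (R k))) \<longlonglongrightarrow> 0" using LIMSEQ_subseq_LIMSEQ[OF dd_tendsto srR] by (simp add: o_def)
    then have "(\<lambda>k. - dd (r (R k))) \<longlonglongrightarrow> - 0" by (intro tendsto_intros)
    moreover have "X k - Y k = - dd (r (R k))" for k unfolding X_def Y_def dd_eq by simp
    ultimately show ?thesis by simp
  qed
  have UV: "(\<lambda>k. U k + V k) \<longlonglongrightarrow> 0"
  proof -
    have "(\<lambda>k. ee (r (R k))) \<longlonglongrightarrow> 0" using LIMSEQ_subseq_LIMSEQ[OF ee_tendsto srR] by (simp add: o_def)
    moreover have "U k + V k = ee (r (R k))" for k unfolding U_def V_def ee_def D_def Y_def by (simp add: algebra_simps)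
    ultimately show ?thesis by simp
  qed
  have bU: "norm (U k) \<le> Ma" for k unfolding U_def by (rule Ma)
  have bY: "norm (Y k) \<le> My" for k unfolding Y_def by (rule My)
  have li: "us \<in> A1 xs \<and> - us - D xs \<in> A2 xs"
    by (rule limit_ident[OF mm1 mm2 Dmono DL K0 UA VA XY UV bU bY wX wU])
  have zeq: "zs = xs + \<gamma> *\<^sub>R us"
  proof -
    have "weakly_converges (\<lambda>k. X k + \<gamma> *\<^sub>R U k) (xs + \<gamma> *\<^sub>R us)" by (intro weak_add weak_scale wX wU)
    moreover have "(\<lambda>k. X k + \<gamma> *\<^sub>R U k) = z \<circ> r \<circ> R" unfolding X_def U_def using R1(2) by (simp add: o_def)
    ultimately have "weakly_converges (z \<circ> r \<circ> R) (xs + \<gamma> *\<^sub>R us)" by simp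
    then show ?thesis using weak_unique[OF wZ] by blast
  qed
  define bs where "bs = - us - D xs"
  have bsA: "bs \<in> A2 xs" unfolding bs_def using li by simp
  have sum0: "us + bs + B xs + C xs = 0" unfolding bs_def D_def by simp
  have zsF: "zs \<in> Fix" unfolding Fix_def using li bsA sum0 zeq by blast
  have res: "xs = resolvent \<gamma> A1 zs" using resolvent_eq[OF mm1 g0 _ zeq] li by simp
  have zer: "xs \<in> zer (op_sum4 A1 A2 B C)"
    unfolding zer_def op_sum4_def using li bsA sum0 by force
  have wx: "weakly_converges (x \<circ> r \<circ> R) xs"
  proof (rule weak_plus_null[OF wX])
    have "(\<lambda>k. x (Suc (r (R k))) - x (r (R k))) \<longlonglongrightarrow> 0"
      using LIMSEQ_subseq_LIMSEQ[OF xstep_tendsto srR] by (simp add: o_def)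
    then have "(\<lambda>k. - (x (Suc (r (R k))) - x (r (R k)))) \<longlonglongrightarrow> - 0" by (intro tendsto_intros)
    then show "(\<lambda>k. (x \<circ> r \<circ> R) k - X k) \<longlonglongrightarrow> 0" unfolding X_def by (simp add: o_def)
  qed
  show ?thesis using sR wZ wx zsF res zer by blast
qed

lemma inner_from_norms:
  fixes v p q :: "'a"
  shows "inner v (p - q) = ((norm (v - q))\<^sup>2 - (norm (v - p))\<^sup>2 - (norm q)\<^sup>2 + (norm p)\<^sup>2) / 2"
  unfolding power2_norm_eq_inner
  by (simp add: inner_diff_left inner_diff_right inner_commute algebra_simps)

lemma final:
  "\<exists>zbar xbar. weakly_converges z zbar \<and> weakly_converges x xbar \<and>
           weakly_converges y xbar \<and> xbar = resolvent \<gamma> A1 zbar \<and>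
           xbar \<in> zer (op_sum4 A1 A2 B C)"
proof -
  have sid: "strict_mono (id :: nat \<Rightarrow> nat)" by (simp add: strict_mono_def)
  obtain R0 :: "nat \<Rightarrow> nat" and zbar xbar where c0: "strict_mono R0" "weakly_converges (z \<circ> id \<circ> R0) zbar"
    "weakly_converges (x \<circ> id \<circ> R0) xbar" "zbar \<in> Fix" "xbar = resolvent \<gamma> A1 zbar" "xbar \<in> zer (op_sum4 A1 A2 B C)"
    using cluster[OF sid] by blast
  have uniq: "zs = zbar" if zsF: "zs \<in> Fix" and sm: "strict_mono (rr :: nat \<Rightarrow> nat)" and wz: "weakly_converges (z \<circ> rr) zs" for zs rr
  proof -
    define w where "w = zbar - zs"
    obtain l1 where l1: "(\<lambda>k. (norm (z k - zs))\<^sup>2) \<longlonglongrightarrow> l1" using norm_conv[OF zsF] unfolding convergent_def by blast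
    obtain l2 where l2: "(\<lambda>k. (norm (z k - zbar))\<^sup>2) \<longlonglongrightarrow> l2" using norm_conv[OF c0(4)] unfolding convergent_def by blast
    have "(\<lambda>k. ((norm (z k - zs))\<^sup>2 - (norm (z k - zbar))\<^sup>2 - (norm zs)\<^sup>2 + (norm zbar)\<^sup>2) / 2)
        \<longlonglongrightarrow> (l1 - l2 - (norm zs)\<^sup>2 + (norm zbar)\<^sup>2) / 2" by (intro tendsto_intros l1 l2) simp
    then have lim: "(\<lambda>k. inner (z k) w) \<longlonglongrightarrow> (l1 - l2 - (norm zs)\<^sup>2 + (norm zbar)\<^sup>2) / 2"
      unfolding w_def inner_from_norms .
    have a1: "(\<lambda>k. inner (z (R0 k)) w) \<longlonglongrightarrow> inner zbar w" using c0(2) unfolding weakly_converges_def by simp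
    have a2: "(\<lambda>k. inner (z (R0 k)) w) \<longlonglongrightarrow> (l1 - l2 - (norm zs)\<^sup>2 + (norm zbar)\<^sup>2) / 2"
      using LIMSEQ_subseq_LIMSEQ[OF lim c0(1)] by (simp add: o_def)
    have b1: "(\<lambda>k. inner (z (rr k)) w) \<longlonglongrightarrow> inner zs w" using wz unfolding weakly_converges_def by simp
    have b2: "(\<lambda>k. inner (z (rr k)) w) \<longlonglongrightarrow> (l1 - l2 - (norm zs)\<^sup>2 + (norm zbar)\<^sup>2) / 2"
      using LIMSEQ_subseq_LIMSEQ[OF lim sm] by (simp add: o_def)
    have "inner zbar w = inner zs w" using LIMSEQ_unique[OF a1 a2] LIMSEQ_unique[OF b1 b2] by simp
    then have "inner w w = 0" unfolding w_def by (simp add: inner_diff_left)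
    then show ?thesis unfolding w_def by simp
  qed
  have wz: "weakly_converges z zbar"
  proof (rule weak_subseq_principle)
    fix r :: "nat \<Rightarrow> nat" assume r: "strict_mono r"
    obtain R :: "nat \<Rightarrow> nat" and zs xs where c: "strict_mono R" "weakly_converges (z \<circ> r \<circ> R) zs" "zs \<in> Fix"
      using cluster[OF r] by blast
    have "strict_mono (r \<circ> R)" using r c(1) by (simp add: strict_mono_def)
    moreover have "weakly_converges (z \<circ> (r \<circ> R)) zs" using c(2) by (simp add: o_assoc)
    ultimately have "zs = zbar" using uniq[OF c(3)] by blast
    then show "\<exists>r'::nat\<Rightarrow>nat. strict_mono r' \<and> weakly_converges (z \<circ> r \<circ> r') zbar" using c by blast
  qed
  have wx: "weakly_converges x xbar"
  proof (rule weak_subseq_principle)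
    fix r :: "nat \<Rightarrow> nat" assume r: "strict_mono r"
    obtain R :: "nat \<Rightarrow> nat" and zs xs where c: "strict_mono R" "weakly_converges (z \<circ> r \<circ> R) zs"
      "weakly_converges (x \<circ> r \<circ> R) xs" "zs \<in> Fix" "xs = resolvent \<gamma> A1 zs"
      using cluster[OF r] by blast
    have "strict_mono (r \<circ> R)" using r c(1) by (simp add: strict_mono_def)
    moreover have "weakly_converges (z \<circ> (r \<circ> R)) zs" using c(2) by (simp add: o_assoc)
    ultimately have "zs = zbar" using uniq[OF c(4)] by blast
    then have "xs = xbar" using c(5) c0(5) by simp
    then show "\<exists>r'::nat\<Rightarrow>nat. strict_mono r' \<and> weakly_converges (x \<circ> r \<circ> r') xbar" using c by blast
  qed
  have wy: "weakly_converges y xbar"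
  proof (rule weak_plus_null[OF wx])
    have "(\<lambda>k. y (Suc k) - x (Suc k)) \<longlonglongrightarrow> 0" using dd_tendsto unfolding dd_eq .
    then show "(\<lambda>n. y n - x n) \<longlonglongrightarrow> 0" by (rule LIMSEQ_imp_Suc)
  qed
  show ?thesis using wz wx wy c0(5) c0(6) by blast
qed

end

theorem theorem3p1:
  fixes A1 A2 :: "'a::{real_inner, complete_space} \<Rightarrow> 'a set"
    and B C :: "'a \<Rightarrow> 'a"
    and L \<beta> \<gamma> :: real
    and x y z :: "nat \<Rightarrow> 'a"
    and y_minus1 :: 'a
  assumes "maximal_monotone A1" and "maximal_monotone A2"
    and "monotone_fun B" and "L > 0" and "lipschitz_op L B"
    and "\<beta> > 0" and "cocoercive \<beta> C"
    and "zer (op_sum4 A1 A2 B C) \<noteq> {}"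
    and "0 < \<gamma>" and "\<gamma> < \<beta> / (2 * (1 + 4 * \<beta> * L))"
    and "\<And>n. x (Suc n) = resolvent \<gamma> A1 (z n)"
    and "\<And>n. y (Suc n) = resolvent \<gamma> A2
            (2 *\<^sub>R x (Suc n) - z n - (2 * \<gamma>) *\<^sub>R B (y n)
             + \<gamma> *\<^sub>R B (if n = 0 then y_minus1 else y (n - 1)) - \<gamma> *\<^sub>R C (y n))"
    and "\<And>n. z (Suc n) = z n + y (Suc n) - x (Suc n)"
  shows "\<exists>zbar xbar. weakly_converges z zbar \<and> weakly_converges x xbar \<and>
           weakly_converges y xbar \<and> xbar = resolvent \<gamma> A1 zbar \<and>
           xbar \<in> zer (op_sum4 A1 A2 B C)"
proof -
  interpret alg A1 A2 B C L \<beta> \<gamma> x y z y_minus1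
    by (rule alg.intro[OF assms])
  show ?thesis by (rule final)
qed

end
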